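(* Let $T$ be large, $x \ge 1$, and $(c(n))_{n \le x}$ any complex numbers. Let $\mathcal{P}$ be a finite set of primes, let $\mathcal{Q}$ be a non-empty set whose elements are some elements of $\mathcal{P}$ and/or squares of elements of $\mathcal{P}$, and let $U := \max\{q \in \mathcal{Q}\}$. Let $Q(t) := \sum_{q \in \mathcal{Q}} \frac{a(q)}{q^{1/2+it}}$ with arbitrary complex $a(q)$. Define $\tilde{d}(n) := \sum_{d \mid n} \mathbf{1}_{p \mid d \Rightarrow p \in \mathcal{P}}$ (the number of divisors of $n$ all of whose prime factors lie in $\mathcal{P}$), and let $v_q = 1$ if $q$ is a prime and $v_q = 6$ if $q$ is the square of a prime. Then: (i) for every natural number $k$ with $x U^k < T$, $$ \frac{1}{T} \int_{T}^{2T} \Big|\sum_{n \le x} c(n) n^{-it} \Big|^{2} |Q(t)|^{2k} dt \ll \Big(\sum_{n \le x} \tilde{d}(n) |c(n)|^2 \Big) \cdot k! \cdot \Big( 2 \sum_{q \in \mathcal{Q}} \frac{v_q |a(q)|^2}{q} \Big)^{k} ; $$ (ii) for every natural number $k$ with $U^{k} < T$, $$ \frac{1}{T} \int_{T}^{2T} |Q(t)|^{2k} dt \ll k! \Big( \sum_{q \in \mathcal{Q}} \frac{v_q |a(q)|^2}{q} \Big)^{k} . $$ The implied constants are absolute. *)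

theory Defs
  imports "HOL-Analysis.Analysis" "HOL-Computational_Algebra.Primes"
begin

definition dtilde :: "nat set \<Rightarrow> nat \<Rightarrow> nat" where
  "dtilde P n = card {d. d dvd n \<and> (\<forall>p. prime p \<and> p dvd d \<longrightarrow> p \<in> P)}"

definition vq :: "nat \<Rightarrow> real" where
  "vq q = (if prime q then 1 else 6)"

definition Qpoly :: "nat set \<Rightarrow> (nat \<Rightarrow> complex) \<Rightarrow> real \<Rightarrow> complex" where
  "Qpoly Qs a t = (\<Sum>q\<in>Qs. a q / (of_nat q powr (1/2 + \<i> * of_real t)))"

definition Dpoly :: "real \<Rightarrow> (nat \<Rightarrow> complex) \<Rightarrow> real \<Rightarrow> complex" where
  "Dpoly x c t = (\<Sum>n\<in>{n. 1 \<le> n \<and> real n \<le> x}. c n * of_nat n powr (- \<i> * of_real t))"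

end

theory Submission
  imports Defs
begin

lemma sum_inv_sq_le:
  "K \<ge> 1 \<Longrightarrow> (\<Sum>j=1..K. 1 / (real j)^2) \<le> 2 - 1 / real K"
proof (induction K rule: dec_induct)
  case base
  then show ?case by simp
next
  case (step K)
  have "(\<Sum>j=1..Suc K. 1 / (real j)^2) = (\<Sum>j=1..K. 1 / (real j)^2) + 1/(real K + 1)^2"
    by simp
  also have "\<dots> \<le> 2 - 1 / real K + 1/(real K + 1)^2" using step by simp
  also have "\<dots> \<le> 2 - 1 / real (Suc K)"
  proof -
    have K: "real K \<ge> 1" using step by simp
    have "1/(real K + 1)^2 \<le> 1/(real K * (real K + 1))"
      using K by (intro divide_left_mono) (auto simp: power2_eq_square)
    also have "\<dots> = 1 / real K - 1 / (real K + 1)" using K by (simp add: field_simps)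
    finally have "1/(real K + 1)^2 \<le> 1 / real K - 1 / (real K + 1)" .
    moreover have "1 / real (Suc K) = 1 / (real K + 1)" by simp
    ultimately show ?thesis by linarith
  qed
  finally show ?case .
qed

lemma sum_inv_sq_le2:
  assumes "finite J" "0 \<notin> J"
  shows "(\<Sum>j\<in>J. 1 / (real j)^2) \<le> 2"
proof (cases "J = {}")
  case True then show ?thesis by simp
next
  case False
  define K where "K = Max J"
  have sub: "J \<subseteq> {1..K}" using assms unfolding K_def
    by (auto simp: Suc_le_eq intro!: Max_ge) (metis gr0I)
  have K1: "K \<ge> 1" using sub False by auto
  have "(\<Sum>j\<in>J. 1 / (real j)^2) \<le> (\<Sum>j=1..K. 1 / (real j)^2)"
    by (rule sum_mono2) (use sub in auto)
  also have "\<dots> \<le> 2 - 1 / real K" by (rule sum_inv_sq_le[OF K1])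
  also have "\<dots> \<le> 2" by simp
  finally show ?thesis .
qed

lemma sum_inv_sq_diff:
  assumes "finite S" "0 \<notin> S" "m \<in> S"
  shows "(\<Sum>n\<in>S-{m}. 1 / (real m - real n)^2) \<le> 4"
proof -
  have split: "S - {m} = {n\<in>S. n < m} \<union> {n\<in>S. m < n}" by auto
  have A: "(\<Sum>n\<in>{n\<in>S. n < m}. 1 / (real m - real n)^2) \<le> 2"
  proof -
    have inj: "inj_on (\<lambda>n. m - n) {n\<in>S. n < m}" by (auto simp: inj_on_def)
    have "(\<Sum>n\<in>{n\<in>S. n < m}. 1 / (real m - real n)^2) = (\<Sum>n\<in>{n\<in>S. n < m}. 1 / (real (m - n))^2)"
      by (rule sum.cong) (auto simp: of_nat_diff)
    also have "\<dots> = (\<Sum>j\<in>(\<lambda>n. m - n) ` {n\<in>S. n < m}. 1 / (real j)^2)"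
      by (subst sum.reindex[OF inj]) simp
    also have "\<dots> \<le> 2" by (rule sum_inv_sq_le2) (use assms in auto)
    finally show ?thesis .
  qed
  have B: "(\<Sum>n\<in>{n\<in>S. m < n}. 1 / (real m - real n)^2) \<le> 2"
  proof -
    have inj: "inj_on (\<lambda>n. n - m) {n\<in>S. m < n}" by (auto simp: inj_on_def)
    have "(\<Sum>n\<in>{n\<in>S. m < n}. 1 / (real m - real n)^2) = (\<Sum>n\<in>{n\<in>S. m < n}. 1 / (real (n - m))^2)"
      by (rule sum.cong) (auto simp: of_nat_diff power2_commute)
    also have "\<dots> = (\<Sum>j\<in>(\<lambda>n. n - m) ` {n\<in>S. m < n}. 1 / (real j)^2)"
      by (subst sum.reindex[OF inj]) simp
    also have "\<dots> \<le> 2" by (rule sum_inv_sq_le2) (use assms in auto)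
    finally show ?thesis .
  qed
  have "(\<Sum>n\<in>S-{m}. 1 / (real m - real n)^2) = (\<Sum>n\<in>{n\<in>S. n < m}. 1 / (real m - real n)^2) + (\<Sum>n\<in>{n\<in>S. m < n}. 1 / (real m - real n)^2)"
    unfolding split by (rule sum.union_disjoint) (use assms in auto)
  then show ?thesis using A B by simp
qed

lemma ln_diff_lower:
  assumes "0 < n" "n < m" "real m \<le> N"
  shows "(real m - real n) / N \<le> ln (real m) - ln (real n)"
proof -
  have "ln (real n / real m) \<le> real n / real m - 1" by (rule ln_le_minus_one) (use assms in auto)
  then have "1 - real n / real m \<le> ln (real m) - ln (real n)"
    using assms by (simp add: ln_div)
  moreover have "(real m - real n) / N \<le> 1 - real n / real m"
  proof -
    have "(real m - real n) / N \<le> (real m - real n) / real m"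
      using assms by (intro divide_left_mono) auto
    also have "\<dots> = 1 - real n / real m" using assms by (simp add: field_simps)
    finally show ?thesis .
  qed
  ultimately show ?thesis by linarith
qed

lemma inv_ln_sq:
  assumes "0 < n" "0 < m" "n \<noteq> m" "real m \<le> N" "real n \<le> N"
  shows "1 / (ln (real m) - ln (real n))^2 \<le> N^2 / (real m - real n)^2"
proof -
  have key: "\<And>m n. 0 < n \<Longrightarrow> n < m \<Longrightarrow> real m \<le> N \<Longrightarrow>
     1 / (ln (real m) - ln (real n))^2 \<le> N^2 / (real m - real n)^2"
  proof -
    fix m n :: nat assume h: "0 < n" "n < m" "real m \<le> N"
    have N0: "N > 0" using h by linarith
    have l: "(real m - real n) / N \<le> ln (real m) - ln (real n)" by (rule ln_diff_lower[OF h])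
    have p: "0 < (real m - real n) / N" using h N0 by simp
    have "((real m - real n) / N)^2 \<le> (ln (real m) - ln (real n))^2"
      by (rule power_mono[OF l]) (use p in linarith)
    moreover have p2: "0 < ((real m - real n) / N)^2" using p by (rule zero_less_power)
    ultimately have le2: "((real m - real n) / N)^2 \<le> (ln (real m) - ln (real n))^2" and p2: "0 < ((real m - real n) / N)^2" by auto
    have q2: "0 < (ln (real m) - ln (real n))^2" using le2 p2 by linarith
    have "1 / (ln (real m) - ln (real n))^2 \<le> 1 / ((real m - real n) / N)^2"
      by (rule divide_left_mono, rule le2, simp, rule mult_pos_pos, rule q2, rule p2)
    also have "\<dots> = N^2 / (real m - real n)^2" by (simp add: power_divide)
    finally show "1 / (ln (real m) - ln (real n))^2 \<le> N^2 / (real m - real n)^2" .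
  qed
  show ?thesis
  proof (cases "n < m")
    case True then show ?thesis using key assms by blast
  next
    case False
    then have "m < n" using assms by auto
    from key[OF assms(2) this assms(5)] show ?thesis by (simp add: power2_commute)
  qed
qed


lemma Re_cis_neg: "Re (z * cis (- th)) = Re z * cos th + Im z * sin th"
  by simp

lemma W_bound: "\<bar>Re (b * cnj c) * cos th + Im (b * cnj c) * sin th\<bar> \<le> cmod b * cmod c"
proof -
  have "\<bar>Re (b * cnj c) * cos th + Im (b * cnj c) * sin th\<bar> = \<bar>Re (b * cnj c * cis (-th))\<bar>"
    by simp
  also have "\<dots> \<le> cmod (b * cnj c * cis (-th))" by (rule abs_Re_le_cmod)
  also have "\<dots> = cmod b * cmod c" by (simp add: norm_mult)
  finally show ?thesis .
qed

lemma norm_sq_expand: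
  fixes S :: "nat set" and b :: "nat \<Rightarrow> complex"
  assumes fin: "finite S"
  shows "(cmod (\<Sum>m\<in>S. b m * cis (-(t * ln (real m)))))^2 =
     (\<Sum>m\<in>S. (cmod (b m))^2) + (\<Sum>m\<in>S. \<Sum>n\<in>S-{m}.
        Re (b m * cnj (b n)) * cos (t * (ln (real m) - ln (real n))) + Im (b m * cnj (b n)) * sin (t * (ln (real m) - ln (real n))))"
proof -
  let ?F = "\<Sum>m\<in>S. b m * cis (-(t * ln (real m)))"
  have "complex_of_real ((cmod ?F)^2) = ?F * cnj ?F" by (rule complex_norm_square)
  also have "\<dots> = (\<Sum>m\<in>S. \<Sum>n\<in>S. b m * cnj (b n) * cis (- (t * (ln (real m) - ln (real n)))))"
    by (simp add: sum_distrib_left sum_distrib_right cis_cnj cis_mult algebra_simps) (rule sum.swap)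
  finally have eq: "(cmod ?F)^2 = Re (\<Sum>m\<in>S. \<Sum>n\<in>S. b m * cnj (b n) * cis (- (t * (ln (real m) - ln (real n)))))"
    by (metis Re_complex_of_real)
  also have "\<dots> = (\<Sum>m\<in>S. \<Sum>n\<in>S. Re (b m * cnj (b n)) * cos (t * (ln (real m) - ln (real n))) + Im (b m * cnj (b n)) * sin (t * (ln (real m) - ln (real n))))"
    by (simp only: Re_sum Re_cis_neg)
  also have "\<dots> = (\<Sum>m\<in>S. (cmod (b m))^2 + (\<Sum>n\<in>S-{m}.
        Re (b m * cnj (b n)) * cos (t * (ln (real m) - ln (real n))) + Im (b m * cnj (b n)) * sin (t * (ln (real m) - ln (real n)))))"
  proof (rule sum.cong[OF refl])
    fix m assume m: "m \<in> S"
    have "Re (b m * cnj (b m)) = (cmod (b m))^2"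
      by (metis Re_complex_of_real complex_norm_square)
    then show "(\<Sum>n\<in>S. Re (b m * cnj (b n)) * cos (t * (ln (real m) - ln (real n))) + Im (b m * cnj (b n)) * sin (t * (ln (real m) - ln (real n)))) =
      (cmod (b m))^2 + (\<Sum>n\<in>S-{m}.
        Re (b m * cnj (b n)) * cos (t * (ln (real m) - ln (real n))) + Im (b m * cnj (b n)) * sin (t * (ln (real m) - ln (real n))))"
      using m fin by (simp add: sum.remove)
  qed
  also have "\<dots> = (\<Sum>m\<in>S. (cmod (b m))^2) + (\<Sum>m\<in>S. \<Sum>n\<in>S-{m}.
        Re (b m * cnj (b n)) * cos (t * (ln (real m) - ln (real n))) + Im (b m * cnj (b n)) * sin (t * (ln (real m) - ln (real n))))"
    by (simp add: sum.distrib)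
  finally show ?thesis .
qed


lemma d_g_term:
  fixes u v x :: real
  assumes "x \<noteq> 0"
  shows "((\<lambda>t. (u * sin (t * x) - v * cos (t * x)) / x) has_real_derivative (u * cos (t * x) + v * sin (t * x))) (at t)"
  using assms by (auto intro!: derivative_eq_intros simp: field_simps)

lemma d_G_term:
  fixes u v x :: real
  assumes "x \<noteq> 0"
  shows "((\<lambda>t. - (u * cos (t * x) + v * sin (t * x)) / x^2) has_real_derivative ((u * sin (t * x) - v * cos (t * x)) / x)) (at t)"
  using assms by (auto intro!: derivative_eq_intros simp: field_simps power2_eq_square)


lemma sum_swap_offdiag:
  assumes "finite S"
  shows "(\<Sum>m\<in>S. \<Sum>n\<in>S-{m}. f m n) = (\<Sum>n\<in>S. \<Sum>m\<in>S-{n}. f m n)"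
proof -
  have "(\<Sum>m\<in>S. \<Sum>n\<in>S-{m}. f m n) = (\<Sum>m\<in>S. \<Sum>n\<in>{n\<in>S. m \<noteq> n}. f m n)"
    by (intro sum.cong) auto
  also have "\<dots> = (\<Sum>n\<in>S. \<Sum>m | m \<in> S \<and> m \<noteq> n. f m n)"
    by (rule sum.swap_restrict) (use assms in auto)
  also have "\<dots> = (\<Sum>n\<in>S. \<Sum>m\<in>S-{n}. f m n)"
    by (intro sum.cong) auto
  finally show ?thesis .
qed

lemma offdiag_bound:
  fixes S :: "nat set" and c :: "nat \<Rightarrow> real" and N :: real
  assumes fin: "finite S" and pos: "0 \<notin> S" and bnd: "\<forall>m\<in>S. real m \<le> N"
  shows "(\<Sum>m\<in>S. \<Sum>n\<in>S-{m}. \<bar>c m\<bar> * \<bar>c n\<bar> / (ln (real m) - ln (real n))^2)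
         \<le> 4 * N^2 * (\<Sum>m\<in>S. (c m)^2)"
proof -
  define w where "w m n = 1 / (ln (real m) - ln (real n))^2" for m n :: nat
  have wsym: "w m n = w n m" for m n unfolding w_def by (simp add: power2_commute)
  have wnn: "w m n \<ge> 0" for m n unfolding w_def by simp
  have "(\<Sum>m\<in>S. \<Sum>n\<in>S-{m}. \<bar>c m\<bar> * \<bar>c n\<bar> / (ln (real m) - ln (real n))^2)
     \<le> (\<Sum>m\<in>S. \<Sum>n\<in>S-{m}. ((c m)^2/2) * w m n + ((c n)^2/2) * w m n)"
  proof (intro sum_mono)
    fix m n
    have "\<bar>c m\<bar> * \<bar>c n\<bar> \<le> (c m)^2/2 + (c n)^2/2"
      using sum_squares_bound[of "\<bar>c m\<bar>" "\<bar>c n\<bar>"] by (simp add: power2_abs)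
    then have "\<bar>c m\<bar> * \<bar>c n\<bar> * w m n \<le> ((c m)^2/2 + (c n)^2/2) * w m n"
      by (rule mult_right_mono) (rule wnn)
    then show "\<bar>c m\<bar> * \<bar>c n\<bar> / (ln (real m) - ln (real n))^2 \<le> ((c m)^2/2) * w m n + ((c n)^2/2) * w m n"
      unfolding w_def by (simp add: algebra_simps)
  qed
  also have "\<dots> = (\<Sum>m\<in>S. \<Sum>n\<in>S-{m}. ((c m)^2/2) * w m n) + (\<Sum>m\<in>S. \<Sum>n\<in>S-{m}. ((c n)^2/2) * w m n)"
    by (simp add: sum.distrib)
  also have "(\<Sum>m\<in>S. \<Sum>n\<in>S-{m}. ((c n)^2/2) * w m n) = (\<Sum>n\<in>S. \<Sum>m\<in>S-{n}. ((c n)^2/2) * w n m)"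
    using sum_swap_offdiag[OF fin, of "\<lambda>m n. ((c n)^2/2) * w m n"] by (simp add: wsym)
  also have "(\<Sum>m\<in>S. \<Sum>n\<in>S-{m}. ((c m)^2/2) * w m n) + (\<Sum>n\<in>S. \<Sum>m\<in>S-{n}. ((c n)^2/2) * w n m)
      = (\<Sum>m\<in>S. (c m)^2 * (\<Sum>n\<in>S-{m}. w m n))"
    by (simp add: sum_distrib_left sum.distrib[symmetric] mult.commute)
  also have "\<dots> \<le> (\<Sum>m\<in>S. (c m)^2 * (4 * N^2))"
  proof (intro sum_mono mult_left_mono)
    fix m assume m: "m \<in> S"
    have "(\<Sum>n\<in>S-{m}. w m n) \<le> (\<Sum>n\<in>S-{m}. N^2 * (1 / (real m - real n)^2))"
    proof (intro sum_mono)
      fix n assume n: "n \<in> S - {m}"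
      have "w m n \<le> N^2 / (real m - real n)^2"
        unfolding w_def by (rule inv_ln_sq) (use m n pos bnd in \<open>auto intro: gr0I\<close>)
      then show "w m n \<le> N^2 * (1 / (real m - real n)^2)" by simp
    qed
    also have "\<dots> = N^2 * (\<Sum>n\<in>S-{m}. 1 / (real m - real n)^2)" by (simp add: sum_distrib_left)
    also have "\<dots> \<le> N^2 * 4"
      by (rule mult_left_mono) (use sum_inv_sq_diff[OF fin pos m] in auto)
    finally show "(\<Sum>n\<in>S-{m}. w m n) \<le> 4 * N^2" by simp
  qed simp
  also have "\<dots> = 4 * N^2 * (\<Sum>m\<in>S. (c m)^2)" by (simp add: sum_distrib_left mult_ac)
  finally show ?thesis .
qed


lemma mvt_core:
  fixes S :: "nat set" and b :: "nat \<Rightarrow> complex" and N T :: real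
  assumes fin: "finite S" and pos: "0 \<notin> S" and bnd: "\<forall>m\<in>S. real m \<le> N" and N0: "0 \<le> N"
    and T: "0 < T" "N \<le> T"
  shows "integral {T..2*T} (\<lambda>t. (cmod (\<Sum>m\<in>S. b m * cis (-(t * ln (real m)))))^2)
     \<le> 34 * T * (\<Sum>m\<in>S. (cmod (b m))^2)"
proof -
  define xi where "xi m n = ln (real m) - ln (real n)" for m n :: nat
  define u where "u m n = Re (b m * cnj (b n))" for m n
  define v where "v m n = Im (b m * cnj (b n))" for m n
  define W where "W m n t = u m n * cos (t * xi m n) + v m n * sin (t * xi m n)" for m n t
  define Sb where "Sb = (\<Sum>m\<in>S. (cmod (b m))^2)"
  define h where "h t = Sb + (\<Sum>m\<in>S. \<Sum>n\<in>S-{m}. W m n t)" for t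
  define g where "g t = t * Sb + (\<Sum>m\<in>S. \<Sum>n\<in>S-{m}. (u m n * sin (t * xi m n) - v m n * cos (t * xi m n)) / xi m n)" for t
  define G where "G t = t^2/2 * Sb + (\<Sum>m\<in>S. \<Sum>n\<in>S-{m}. - (u m n * cos (t * xi m n) + v m n * sin (t * xi m n)) / (xi m n)^2)" for t
  have xi0: "xi m n \<noteq> 0" if "m \<in> S" "n \<in> S-{m}" for m n
  proof
    assume "xi m n = 0"
    then have "ln (real m) = ln (real n)" unfolding xi_def by simp
    moreover have "0 < m" "0 < n" using that pos by (auto intro: gr0I)
    ultimately have "m = n" by simp
    then show False using that by simp
  qed
  have hF: "(cmod (\<Sum>m\<in>S. b m * cis (-(t * ln (real m)))))^2 = h t" for t
    using norm_sq_expand[OF fin] unfolding h_def W_def xi_def Sb_def u_def v_def by simp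
  have hnn: "h t \<ge> 0" for t using hF[of t] by (metis zero_le_power2)
  have dg: "(g has_real_derivative h t) (at t)" for t
    unfolding g_def h_def W_def
    apply (rule DERIV_add)
     apply (auto intro!: derivative_eq_intros)[1]
    apply (rule DERIV_sum)
    apply (rule DERIV_sum)
    apply (rule d_g_term)
    using xi0 by auto
  have dG: "(G has_real_derivative g t) (at t)" for t
    unfolding g_def G_def
    apply (rule DERIV_add)
     apply (auto intro!: derivative_eq_intros)[1]
    apply (rule DERIV_sum)
    apply (rule DERIV_sum)
    apply (rule d_G_term)
    using xi0 by auto
  have hint: "(h has_integral (g c - g a)) {a..c}" if "a \<le> c" for a c
    by (rule fundamental_theorem_of_calculus[OF that])
       (metis dg has_field_derivative_at_within has_real_derivative_iff_has_vector_derivative)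
  define t0 where "t0 = 3 * T / 2"
  define Psi where "Psi s = G (t0 + s) + G (t0 - s)" for s
  have dPsi: "(Psi has_real_derivative (g (t0 + s) - g (t0 - s))) (at s)" for s
  proof -
    have a: "((\<lambda>s. G (t0 + s)) has_real_derivative g (t0 + s) * 1) (at s)"
      by (rule DERIV_chain2[OF dG]) (auto intro!: derivative_eq_intros)
    have b: "((\<lambda>s. G (t0 - s)) has_real_derivative g (t0 - s) * (-1)) (at s)"
      by (rule DERIV_chain2[OF dG]) (auto intro!: derivative_eq_intros)
    show ?thesis unfolding Psi_def using DERIV_add[OF a b] by simp
  qed
  obtain z where z: "T/2 < z" "z < T" and zeq: "Psi T - Psi (T/2) = (T - T/2) * (g (t0 + z) - g (t0 - z))"
    using MVT2[of "T/2" T Psi "\<lambda>s. g (t0 + s) - g (t0 - s)"] T dPsi by auto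
  have I1: "integral {T..2*T} h \<le> integral {t0 - z..t0 + z} h"
  proof (rule integral_subset_le)
    show "{T..2*T} \<subseteq> {t0 - z..t0 + z}" using z unfolding t0_def by auto
    show "h integrable_on {T..2*T}" using hint[of T "2*T"] T by (auto simp: has_integral_integrable)
    show "h integrable_on {t0 - z..t0 + z}" using hint[of "t0 - z" "t0 + z"] z T by (auto intro: has_integral_integrable)
  qed (use hnn in auto)
  have I2: "integral {t0 - z..t0 + z} h = g (t0 + z) - g (t0 - z)"
    using hint[of "t0 - z" "t0 + z"] z T by (auto intro: integral_unique)
  have Wb: "\<bar>W m n s\<bar> \<le> cmod (b m) * cmod (b n)" for m n s
    unfolding W_def u_def v_def by (rule W_bound)
  have Gform: "G t = t^2/2 * Sb - (\<Sum>m\<in>S. \<Sum>n\<in>S-{m}. W m n t / (xi m n)^2)" for t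
    unfolding G_def W_def by (simp only: minus_divide_left[symmetric] sum_negf diff_conv_add_uminus)
  have PsiEq: "Psi T - Psi (T/2) = 3/4 * T^2 * Sb + (\<Sum>m\<in>S. \<Sum>n\<in>S-{m}.
        (W m n (t0 + T/2) + W m n (t0 - T/2) - W m n (t0 + T) - W m n (t0 - T)) / (xi m n)^2)"
  proof -
    have e: "(\<Sum>m\<in>S. \<Sum>n\<in>S-{m}.
        (W m n (t0 + T/2) + W m n (t0 - T/2) - W m n (t0 + T) - W m n (t0 - T)) / (xi m n)^2)
      = (\<Sum>m\<in>S. \<Sum>n\<in>S-{m}. W m n (t0 + T/2) / (xi m n)^2) + (\<Sum>m\<in>S. \<Sum>n\<in>S-{m}. W m n (t0 - T/2) / (xi m n)^2)
       - (\<Sum>m\<in>S. \<Sum>n\<in>S-{m}. W m n (t0 + T) / (xi m n)^2) - (\<Sum>m\<in>S. \<Sum>n\<in>S-{m}. W m n (t0 - T) / (xi m n)^2)"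
      by (simp only: add_divide_distrib diff_divide_distrib sum.distrib sum_subtractf)
    show ?thesis unfolding Psi_def Gform e by (simp add: algebra_simps power2_eq_square add_divide_distrib[symmetric] diff_divide_distrib[symmetric])
  qed
  have off: "(\<Sum>m\<in>S. \<Sum>n\<in>S-{m}.
        (W m n (t0 + T/2) + W m n (t0 - T/2) - W m n (t0 + T) - W m n (t0 - T)) / (xi m n)^2)
      \<le> (\<Sum>m\<in>S. \<Sum>n\<in>S-{m}. 4 * (\<bar>cmod (b m)\<bar> * \<bar>cmod (b n)\<bar> / (ln (real m) - ln (real n))^2))"
  proof (intro sum_mono)
    fix m n
    have "W m n (t0 + T/2) + W m n (t0 - T/2) - W m n (t0 + T) - W m n (t0 - T) \<le> 4 * (cmod (b m) * cmod (b n))"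
      using Wb[of m n "t0 + T/2"] Wb[of m n "t0 - T/2"] Wb[of m n "t0 + T"] Wb[of m n "t0 - T"] by linarith
    then show "(W m n (t0 + T/2) + W m n (t0 - T/2) - W m n (t0 + T) - W m n (t0 - T)) / (xi m n)^2
       \<le> 4 * (\<bar>cmod (b m)\<bar> * \<bar>cmod (b n)\<bar> / (ln (real m) - ln (real n))^2)"
      unfolding xi_def by (simp add: divide_right_mono)
  qed
  have off2: "(\<Sum>m\<in>S. \<Sum>n\<in>S-{m}. 4 * (\<bar>cmod (b m)\<bar> * \<bar>cmod (b n)\<bar> / (ln (real m) - ln (real n))^2))
       \<le> 4 * (4 * N^2 * Sb)"
  proof -
    have "(\<Sum>m\<in>S. \<Sum>n\<in>S-{m}. 4 * (\<bar>cmod (b m)\<bar> * \<bar>cmod (b n)\<bar> / (ln (real m) - ln (real n))^2))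
      = 4 * (\<Sum>m\<in>S. \<Sum>n\<in>S-{m}. \<bar>cmod (b m)\<bar> * \<bar>cmod (b n)\<bar> / (ln (real m) - ln (real n))^2)"
      by (simp only: sum_distrib_left)
    moreover have "(\<Sum>m\<in>S. \<Sum>n\<in>S-{m}. \<bar>cmod (b m)\<bar> * \<bar>cmod (b n)\<bar> / (ln (real m) - ln (real n))^2) \<le> 4 * N^2 * Sb"
      using offdiag_bound[OF fin pos bnd, of "\<lambda>m. cmod (b m)"] unfolding Sb_def by simp
    ultimately show ?thesis by (simp only:)
  qed
  have Sb0: "Sb \<ge> 0" unfolding Sb_def by (simp add: sum_nonneg)
  have NT: "N^2 \<le> T^2" using N0 T by (simp add: power_mono)
  have "integral {T..2*T} (\<lambda>t. (cmod (\<Sum>m\<in>S. b m * cis (-(t * ln (real m)))))^2) = integral {T..2*T} h"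
    using hF by simp
  also have "\<dots> \<le> g (t0 + z) - g (t0 - z)" using I1 I2 by simp
  also have "\<dots> = (Psi T - Psi (T/2)) * (2 / T)" using zeq T by (simp add: field_simps)
  also have "\<dots> \<le> (3/4 * T^2 * Sb + 16 * T^2 * Sb) * (2 / T)"
  proof (rule mult_right_mono)
    have "16 * N^2 * Sb \<le> 16 * T^2 * Sb" using NT Sb0 by (simp add: mult_right_mono)
    then show "Psi T - Psi (T/2) \<le> 3/4 * T^2 * Sb + 16 * T^2 * Sb"
      using PsiEq off off2 by linarith
  qed (use T in simp)
  also have "\<dots> = 33.5 * T * Sb" using T by (simp add: field_simps power2_eq_square)
  also have "\<dots> \<le> 34 * T * Sb" using T Sb0 by (simp add: mult_right_mono)
  finally show ?thesis unfolding Sb_def .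
qed


lemma weighted_cs:
  fixes z :: "'i \<Rightarrow> complex" and w :: "'i \<Rightarrow> real"
  assumes "\<forall>i\<in>A. 0 < w i"
  shows "(cmod (\<Sum>i\<in>A. z i))^2 \<le> (\<Sum>i\<in>A. w i) * (\<Sum>i\<in>A. (cmod (z i))^2 / w i)"
proof -
  have "cmod (\<Sum>i\<in>A. z i) \<le> (\<Sum>i\<in>A. cmod (z i))" by (rule norm_sum)
  then have "(cmod (\<Sum>i\<in>A. z i))^2 \<le> (\<Sum>i\<in>A. cmod (z i))^2"
    by (rule power_mono) simp
  also have "(\<Sum>i\<in>A. cmod (z i)) = (\<Sum>i\<in>A. sqrt (w i) * (cmod (z i) / sqrt (w i)))"
    by (rule sum.cong) (use assms in auto)
  also have "(\<dots>)^2 \<le> (\<Sum>i\<in>A. (sqrt (w i))^2) * (\<Sum>i\<in>A. (cmod (z i) / sqrt (w i))^2)"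
    by (rule Cauchy_Schwarz_ineq_sum)
  also have "\<dots> = (\<Sum>i\<in>A. w i) * (\<Sum>i\<in>A. (cmod (z i))^2 / w i)"
    using assms by (intro arg_cong2[where f="(*)"] sum.cong) (auto simp: power_divide)
  finally show ?thesis .
qed

lemma mvt_index:
  fixes I :: "'i set" and f :: "'i \<Rightarrow> nat" and z :: "'i \<Rightarrow> complex" and w :: "'i \<Rightarrow> real"
  assumes fin: "finite I" and fpos: "\<forall>i\<in>I. 0 < f i \<and> real (f i) \<le> N" and N0: "0 \<le> N"
    and T: "0 < T" "N \<le> T" and wpos: "\<forall>i\<in>I. 0 < w i"
  shows "integral {T..2*T} (\<lambda>t. (cmod (\<Sum>i\<in>I. z i * cis (-(t * ln (real (f i))))))^2)
    \<le> 34 * T * (\<Sum>i\<in>I. (cmod (z i))^2 / w i * (\<Sum>j\<in>{j\<in>I. f j = f i}. w j))"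
proof -
  define B where "B m = (\<Sum>i\<in>{i\<in>I. f i = m}. z i)" for m
  have eqF: "(\<Sum>i\<in>I. z i * cis (-(t * ln (real (f i))))) = (\<Sum>m\<in>f ` I. B m * cis (-(t * ln (real m))))" for t
  proof -
    have "(\<Sum>i\<in>I. z i * cis (-(t * ln (real (f i))))) = (\<Sum>m\<in>f ` I. \<Sum>i\<in>{i\<in>I. f i = m}. z i * cis (-(t * ln (real (f i)))))"
      by (rule sum.image_gen[OF fin])
    also have "\<dots> = (\<Sum>m\<in>f ` I. B m * cis (-(t * ln (real m))))"
      unfolding B_def sum_distrib_right by (intro sum.cong) auto
    finally show ?thesis .
  qed
  have "integral {T..2*T} (\<lambda>t. (cmod (\<Sum>i\<in>I. z i * cis (-(t * ln (real (f i))))))^2)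
      = integral {T..2*T} (\<lambda>t. (cmod (\<Sum>m\<in>f ` I. B m * cis (-(t * ln (real m)))))^2)"
    by (simp only: eqF)
  also have "\<dots> \<le> 34 * T * (\<Sum>m\<in>f ` I. (cmod (B m))^2)"
    by (rule mvt_core) (use fin fpos N0 T in auto)
  also have "(\<Sum>m\<in>f ` I. (cmod (B m))^2) \<le> (\<Sum>m\<in>f ` I. \<Sum>i\<in>{i\<in>I. f i = m}. (cmod (z i))^2 / w i * (\<Sum>j\<in>{j\<in>I. f j = m}. w j))"
  proof (rule sum_mono)
    fix m
    have "(cmod (B m))^2 \<le> (\<Sum>j\<in>{j\<in>I. f j = m}. w j) * (\<Sum>i\<in>{i\<in>I. f i = m}. (cmod (z i))^2 / w i)"
      unfolding B_def by (rule weighted_cs) (use wpos in auto)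
    also have "\<dots> = (\<Sum>i\<in>{i\<in>I. f i = m}. (cmod (z i))^2 / w i) * (\<Sum>j\<in>{j\<in>I. f j = m}. w j)"
      by (rule mult.commute)
    also have "\<dots> = (\<Sum>i\<in>{i\<in>I. f i = m}. (cmod (z i))^2 / w i * (\<Sum>j\<in>{j\<in>I. f j = m}. w j))"
      by (simp only: sum_distrib_right)
    finally show "(cmod (B m))^2 \<le> (\<Sum>i\<in>{i\<in>I. f i = m}. (cmod (z i))^2 / w i * (\<Sum>j\<in>{j\<in>I. f j = m}. w j))" .
  qed
  also have "\<dots> = (\<Sum>m\<in>f ` I. \<Sum>i\<in>{i\<in>I. f i = m}. (cmod (z i))^2 / w i * (\<Sum>j\<in>{j\<in>I. f j = f i}. w j))"
    by (intro sum.cong) auto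
  also have "\<dots> = (\<Sum>i\<in>I. (cmod (z i))^2 / w i * (\<Sum>j\<in>{j\<in>I. f j = f i}. w j))"
    by (rule sum.image_gen[OF fin, symmetric])
  finally show ?thesis using T by (simp add: mult_left_mono)
qed


definition adm :: "nat set \<Rightarrow> bool" where
  "adm Q \<longleftrightarrow> (\<forall>q\<in>Q. prime q \<or> (\<exists>p. prime p \<and> q = p^2))"

definition Lk :: "nat set \<Rightarrow> nat \<Rightarrow> nat list set" where
  "Lk Q k = {xs. set xs \<subseteq> Q \<and> length xs = k}"

definition Rk :: "nat set \<Rightarrow> nat \<Rightarrow> nat \<Rightarrow> nat" where
  "Rk Q k l = card {xs \<in> Lk Q k. prod_list xs = l}"

definition Omega :: "nat \<Rightarrow> nat" where
  "Omega n = size (prime_factorization n)"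

lemma finite_Lk: "finite Q \<Longrightarrow> finite (Lk Q k)"
  unfolding Lk_def by (rule finite_lists_length_eq)

lemma adm_elem: "adm Q \<Longrightarrow> q \<in> Q \<Longrightarrow> \<exists>r. prime r \<and> (q = r \<or> q = r^2)"
  unfolding adm_def by auto

lemma adm_pos: "adm Q \<Longrightarrow> q \<in> Q \<Longrightarrow> 0 < q"
  using adm_elem[of Q q] prime_gt_0_nat by auto

lemma Omega_mult: "a \<noteq> 0 \<Longrightarrow> b \<noteq> 0 \<Longrightarrow> Omega (a * b) = Omega a + Omega b"
  unfolding Omega_def by (simp add: prime_factorization_mult)

lemma Omega_prime: "prime p \<Longrightarrow> Omega p = 1"
  unfolding Omega_def by (simp add: prime_factorization_prime)

lemma Omega_prime_sq: "prime p \<Longrightarrow> Omega (p^2) = 2"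
proof -
  assume p: "prime p"
  then have "p \<noteq> 0" by auto
  then show ?thesis using p by (simp add: power2_eq_square Omega_mult Omega_prime)
qed

lemma Omega_adm: "adm Q \<Longrightarrow> q \<in> Q \<Longrightarrow> Omega q \<ge> 1"
  using adm_elem[of Q q] Omega_prime Omega_prime_sq by fastforce

lemma prod_list_pos: "\<forall>q\<in>set xs. 0 < q \<Longrightarrow> 0 < prod_list (xs :: nat list)"
  by (induction xs) auto

lemma Omega_prod_list: "\<forall>q\<in>set xs. 0 < q \<Longrightarrow> Omega (prod_list xs) = sum_list (map Omega xs)"
proof (induction xs)
  case Nil then show ?case by (simp add: Omega_def)
next
  case (Cons a xs)
  then have "0 < prod_list xs" by (intro prod_list_pos) auto
  then show ?case using Cons by (simp add: Omega_mult)
qed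

lemma Omega_Lk: "adm Q \<Longrightarrow> xs \<in> Lk Q k \<Longrightarrow> k \<le> Omega (prod_list xs)"
proof -
  assume a: "adm Q" "xs \<in> Lk Q k"
  then have pos: "\<forall>q\<in>set xs. 0 < q" using adm_pos unfolding Lk_def by blast
  have "k = sum_list (map (\<lambda>_. 1) xs)" using a unfolding Lk_def by (simp add: sum_list_triv)
  also have "\<dots> \<le> sum_list (map Omega xs)"
    by (rule sum_list_mono) (use a Omega_adm in \<open>auto simp: Lk_def\<close>)
  also have "\<dots> = Omega (prod_list xs)" using Omega_prod_list[OF pos] by simp
  finally show ?thesis .
qed

lemma Rk_pos_Omega: "adm Q \<Longrightarrow> 0 < Rk Q k l \<Longrightarrow> k \<le> Omega l"
proof -
  assume a: "adm Q" "0 < Rk Q k l"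
  then obtain xs where "xs \<in> Lk Q k" "prod_list xs = l" unfolding Rk_def
    by (auto simp: card_gt_0_iff)
  then show ?thesis using Omega_Lk[OF a(1)] by blast
qed

lemma mult_prod_list:
  assumes "prime (p::nat)" "\<forall>q\<in>set xs. 0 < q"
  shows "multiplicity p (prod_list xs) = (\<Sum>i<length xs. multiplicity p (xs ! i))"
  using assms(2)
proof (induction xs)
  case Nil then show ?case by simp
next
  case (Cons a xs)
  then have "0 < prod_list xs" by (intro prod_list_pos) auto
  then have "multiplicity p (prod_list (a # xs)) = multiplicity p a + multiplicity p (prod_list xs)"
    using Cons assms(1) by (simp add: prime_elem_multiplicity_mult_distrib)
  then show ?case using Cons by (simp del: sum.lessThan_Suc add: sum.lessThan_Suc_shift)
qed

lemma mult_adm_elem: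
  assumes "adm Q" "q \<in> Q" "prime (p::nat)"
  shows "real (multiplicity p q) = (if q = p then 1 else 0) + (if q = p^2 then 2 else 0)"
proof -
  obtain r where r: "prime r" "q = r \<or> q = r^2" using adm_elem[OF assms(1,2)] by blast
  have p1: "p > 1" using assms(3) prime_gt_1_nat by blast
  have "p * 1 < p * p" using p1 by (intro mult_strict_left_mono) auto
  then have np: "p \<noteq> p^2" by (simp add: power2_eq_square)
  show ?thesis
  proof (cases "r = p")
    case True
    then show ?thesis using r assms(3) p1 np
      by (auto simp: multiplicity_prime_power)
  next
    case False
    then have m1: "multiplicity p r = 0" using multiplicity_distinct_prime_power[of p r 1] r assms(3) by auto
    have m2: "multiplicity p (r^2) = 0" using multiplicity_distinct_prime_power[of p r 2] r assms(3) False by auto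
    have ne1: "r \<noteq> p^2" using r(1) assms(3) by (metis prime_power_iff prime_nat_iff less_numeral_extra(4) power_one_right one_less_numeral_iff semiring_norm(76) prime_power_iff)
    have ne2: "r^2 \<noteq> p^2" using False by (simp add: power2_eq_square) (metis nat_mult_eq_cancel_disj le_antisym mult_le_mono nat_le_linear)
    have npr: "p \<noteq> r^2" using assms(3) r(1) by (auto simp: prime_power_iff)
    show ?thesis using r False m1 m2 ne1 ne2 npr by auto
  qed
qed


definition del :: "nat \<Rightarrow> 'a list \<Rightarrow> 'a list" where
  "del i xs = take i xs @ drop (Suc i) xs"

lemma del_length: "i < length xs \<Longrightarrow> length (del i xs) = length xs - 1"
  unfolding del_def by simp

lemma del_set: "set (del i xs) \<subseteq> set xs"
  unfolding del_def using set_drop_subset[of "Suc i" xs] set_take_subset[of i xs] by auto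

lemma del_prod: "i < length xs \<Longrightarrow> prod_list xs = xs ! i * prod_list (del i (xs :: nat list))"
proof -
  assume i: "i < length xs"
  have "prod_list xs = prod_list (take i xs @ xs ! i # drop (Suc i) xs)"
    using id_take_nth_drop[OF i] by simp
  then show ?thesis unfolding del_def by simp
qed

lemma del_inj:
  assumes "i < length xs" "i < length ys" "del i xs = del i ys" "xs ! i = ys ! i"
  shows "xs = ys"
proof -
  have t: "take i xs = take i ys"
  proof -
    have "take i (del i xs) = take i xs" unfolding del_def using assms(1) by simp
    moreover have "take i (del i ys) = take i ys" unfolding del_def using assms(2) by simp
    ultimately show ?thesis using assms(3) by simp
  qed
  have d: "drop (Suc i) xs = drop (Suc i) ys"
  proof -
    have "drop i (del i xs) = drop (Suc i) xs" unfolding del_def using assms(1) by simp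
    moreover have "drop i (del i ys) = drop (Suc i) ys" unfolding del_def using assms(2) by simp
    ultimately show ?thesis using assms(3) by simp
  qed
  show ?thesis using id_take_nth_drop[OF assms(1)] id_take_nth_drop[OF assms(2)] t d assms(4) by metis
qed

lemma nth_dvd_prod: "i < length xs \<Longrightarrow> xs ! i dvd prod_list (xs :: nat list)"
  using del_prod by (metis dvd_triv_left)

lemma card_pos_le:
  assumes "finite Q" "0 < q" "i < Suc k"
  shows "card {xs \<in> Lk Q (Suc k). prod_list xs = l \<and> xs ! i = q} \<le> Rk Q k (l div q)"
  unfolding Rk_def
proof (rule card_inj_on_le[where f = "del i"])
  show "inj_on (del i) {xs \<in> Lk Q (Suc k). prod_list xs = l \<and> xs ! i = q}"
    using assms(3) by (auto simp: inj_on_def Lk_def intro: del_inj)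
  show "del i ` {xs \<in> Lk Q (Suc k). prod_list xs = l \<and> xs ! i = q} \<subseteq> {xs \<in> Lk Q k. prod_list xs = l div q}"
  proof
    fix ys assume "ys \<in> del i ` {xs \<in> Lk Q (Suc k). prod_list xs = l \<and> xs ! i = q}"
    then obtain xs where xs: "xs \<in> Lk Q (Suc k)" "prod_list xs = l" "xs ! i = q" "ys = del i xs" by auto
    have len: "i < length xs" using xs(1) assms(3) unfolding Lk_def by simp
    have "ys \<in> Lk Q k" using xs del_set[of i xs] del_length[OF len] unfolding Lk_def by auto
    moreover have "prod_list ys = l div q" using del_prod[OF len] xs assms(2) by simp
    ultimately show "ys \<in> {xs \<in> Lk Q k. prod_list xs = l div q}" by simp
  qed
  show "finite {xs \<in> Lk Q k. prod_list xs = l div q}" using finite_Lk[OF assms(1)] by simp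
qed


lemma Omega_div_prime:
  assumes "prime p" "p dvd l" "l \<noteq> 0"
  shows "Omega l = Omega (l div p) + 1"
proof -
  have l: "l = p * (l div p)" using assms(2) by simp
  have "l div p \<noteq> 0" using assms l by (metis mult_0_right)
  then have "Omega (p * (l div p)) = Omega p + Omega (l div p)"
    using assms(1) by (intro Omega_mult) auto
  then show ?thesis using l Omega_prime[OF assms(1)] by simp
qed

lemma Omega_div_prime_sq:
  assumes "prime p" "p^2 dvd l" "l \<noteq> 0"
  shows "Omega l = Omega (l div p^2) + 2"
proof -
  have l: "l = p^2 * (l div p^2)" using assms(2) by simp
  have "l div p^2 \<noteq> 0" using assms l by (metis mult_0_right)
  then have "Omega (p^2 * (l div p^2)) = Omega (p^2) + Omega (l div p^2)"
    using assms(1) by (intro Omega_mult) auto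
  then show ?thesis using l Omega_prime_sq[OF assms(1)] by simp
qed

lemma Rk_bound:
  assumes adm: "adm Q" and fin: "finite Q"
  shows "real (Rk Q k l) \<le> fact k * 2 ^ (Omega l - k)"
proof (induction k arbitrary: l)
  case 0
  have "Lk Q 0 = {[]}" unfolding Lk_def by auto
  then have "Rk Q 0 l \<le> 1" unfolding Rk_def
    by (metis (no_types, lifting) card.empty card.insert empty_iff finite.intros(1) le_refl mem_Collect_eq subsetI card_mono finite.emptyI finite_insert is_singletonI is_singleton_altdef)
  then have "real (Rk Q 0 l) \<le> 1" by simp
  moreover have "(1::real) \<le> 2 ^ (Omega l - 0)" by simp
  ultimately show ?case by (simp only: fact_0 of_nat_1 mult_1)
next
  case (Suc k)
  define A where "A = {xs \<in> Lk Q (Suc k). prod_list xs = l}"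
  have finA: "finite A" unfolding A_def using finite_Lk[OF fin] by simp
  show ?case
  proof (cases "A = {}")
    case True
    then show ?thesis unfolding Rk_def A_def[symmetric] by simp
  next
    case False
    then obtain xs0 where xs0: "xs0 \<in> Lk Q (Suc k)" "prod_list xs0 = l" unfolding A_def by auto
    have len0: "0 < length xs0" using xs0 unfolding Lk_def by simp
    have q0: "xs0 ! 0 \<in> Q" using xs0 len0 unfolding Lk_def by (auto simp: nth_mem subset_iff)
    obtain p where p: "prime p" "xs0 ! 0 = p \<or> xs0 ! 0 = p^2" using adm_elem[OF adm q0] by blast
    have posl: "\<forall>q\<in>set xs0. 0 < q" using xs0 adm_pos[OF adm] unfolding Lk_def by auto
    have l0: "l \<noteq> 0" using prod_list_pos[OF posl] xs0 by simp
    have "p dvd xs0 ! 0" using p by auto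
    then have pdl: "p dvd l" using nth_dvd_prod[OF len0] xs0 dvd_trans by metis
    define e where "e = multiplicity p l"
    have p1: "\<not> is_unit p" using p(1) by (simp add: prime_nat_iff)
    have e1: "1 \<le> e" unfolding e_def using multiplicity_geI[OF l0 p1, of 1] pdl by simp
    define R2 where "R2 = (if p^2 dvd l then real (Rk Q k (l div p^2)) else 0)"
    have inner: "(\<Sum>xs\<in>A. real (multiplicity p (xs ! i))) \<le> real (Rk Q k (l div p)) + 2 * R2"
      if i: "i < Suc k" for i
    proof -
      have "(\<Sum>xs\<in>A. real (multiplicity p (xs ! i))) =
            (\<Sum>xs\<in>A. (if xs ! i = p then 1 else 0) + (if xs ! i = p^2 then 2 else 0))"
      proof (rule sum.cong[OF refl])
        fix xs assume "xs \<in> A"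
        then have "xs ! i \<in> Q" using i unfolding A_def Lk_def by (auto simp: nth_mem subset_iff)
        then show "real (multiplicity p (xs ! i)) = (if xs ! i = p then 1 else 0) + (if xs ! i = p^2 then 2 else 0)"
          by (rule mult_adm_elem[OF adm _ p(1)])
      qed
      also have "\<dots> = real (card {xs\<in>A. xs ! i = p}) + 2 * real (card {xs\<in>A. xs ! i = p^2})"
        using finA by (simp add: sum.distrib sum.inter_filter[symmetric])
      also have "\<dots> \<le> real (Rk Q k (l div p)) + 2 * R2"
      proof -
        have c1: "card {xs\<in>A. xs ! i = p} \<le> Rk Q k (l div p)"
          using card_pos_le[OF fin _ i, of p l] p(1) unfolding A_def
          by (simp add: prime_gt_0_nat conj_assoc)
        have c2: "real (card {xs\<in>A. xs ! i = p^2}) \<le> R2"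
        proof (cases "p^2 dvd l")
          case True
          have "card {xs\<in>A. xs ! i = p^2} \<le> Rk Q k (l div p^2)"
            using card_pos_le[OF fin _ i, of "p^2" l] p(1) unfolding A_def
            by (simp add: prime_gt_0_nat conj_assoc)
          then show ?thesis unfolding R2_def using True by simp
        next
          case False
          have emp: "{xs\<in>A. xs ! i = p^2} = {}"
          proof (rule ccontr)
            assume "{xs\<in>A. xs ! i = p^2} \<noteq> {}"
            then obtain xs where "xs \<in> A" "xs ! i = p^2" by auto
            then have "p^2 dvd l" using nth_dvd_prod[of i xs] i unfolding A_def Lk_def by auto
            then show False using False by simp
          qed
          show ?thesis unfolding R2_def emp using False by simp
        qed
        show ?thesis using c1 c2 by simp
      qed
      finally show ?thesis .
    qed
    have key: "real e * real (card A) \<le> real (Suc k) * (real (Rk Q k (l div p)) + 2 * R2)"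
    proof -
      have "real e * real (card A) = (\<Sum>xs\<in>A. real e)" by simp
      also have "\<dots> = (\<Sum>xs\<in>A. \<Sum>i<Suc k. real (multiplicity p (xs ! i)))"
      proof (rule sum.cong[OF refl])
        fix xs assume xs: "xs \<in> A"
        have pos: "\<forall>q\<in>set xs. 0 < q" using xs adm_pos[OF adm] unfolding A_def Lk_def by auto
        have "multiplicity p l = (\<Sum>i<length xs. multiplicity p (xs ! i))"
          using mult_prod_list[OF p(1) pos] xs unfolding A_def by simp
        then show "real e = (\<Sum>i<Suc k. real (multiplicity p (xs ! i)))"
          using xs unfolding e_def A_def Lk_def by simp
      qed
      also have "\<dots> = (\<Sum>i<Suc k. \<Sum>xs\<in>A. real (multiplicity p (xs ! i)))" by (rule sum.swap)
      also have "\<dots> \<le> (\<Sum>i<Suc k. real (Rk Q k (l div p)) + 2 * R2)"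
        by (rule sum_mono) (use inner in auto)
      also have "\<dots> = real (Suc k) * (real (Rk Q k (l div p)) + 2 * R2)" by simp
      finally show ?thesis .
    qed
    define J where "J = Omega l - Suc k"
    have Om1: "Omega l = Omega (l div p) + 1" by (rule Omega_div_prime[OF p(1) pdl l0])
    have b1: "real (Rk Q k (l div p)) \<le> fact k * 2 ^ J"
      using Suc.IH[of "l div p"] Om1 unfolding J_def by simp
    have cardA: "card A = Rk Q (Suc k) l" unfolding A_def Rk_def by simp
    show ?thesis
    proof (cases "p^2 dvd l")
      case True
      have e2: "2 \<le> e" unfolding e_def using multiplicity_geI[OF l0 p1, of 2] True by simp
      have Om2: "Omega l = Omega (l div p^2) + 2" by (rule Omega_div_prime_sq[OF p(1) True l0])
      have b2: "2 * R2 \<le> fact k * 2 ^ J"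
      proof (cases "Rk Q k (l div p^2) = 0")
        case True
        then show ?thesis unfolding R2_def by simp
      next
        case False
        then have "k \<le> Omega (l div p^2)" using Rk_pos_Omega[OF adm] by auto
        then have JJ: "J = Suc (Omega (l div p^2) - k)" unfolding J_def using Om2 by simp
        have "2 * R2 \<le> 2 * (fact k * 2 ^ (Omega (l div p^2) - k))"
          using Suc.IH[of "l div p^2"] True unfolding R2_def by simp
        also have "\<dots> = fact k * 2 ^ J" unfolding JJ by simp
        finally show ?thesis .
      qed
      have "real e * real (card A) \<le> real (Suc k) * (2 * (fact k * 2 ^ J))"
        using key b1 b2 by (smt (verit, best) mult_left_mono of_nat_0_le_iff)
      also have "\<dots> = 2 * (fact (Suc k) * 2 ^ J)" by simp
      finally have "real e * real (card A) \<le> 2 * (fact (Suc k) * 2 ^ J)" .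
      moreover have "2 * real (card A) \<le> real e * real (card A)" using e2 by (intro mult_right_mono) auto
      ultimately have "real (card A) \<le> fact (Suc k) * 2 ^ J" by linarith
      then show ?thesis using cardA unfolding J_def by simp
    next
      case False
      have "real e * real (card A) \<le> real (Suc k) * (fact k * 2 ^ J)"
      proof -
        have "real (Suc k) * (real (Rk Q k (l div p)) + 2 * R2) \<le> real (Suc k) * (fact k * 2 ^ J)"
          using b1 False unfolding R2_def by (intro mult_left_mono) auto
        then show ?thesis using key by linarith
      qed
      also have "\<dots> = fact (Suc k) * 2 ^ J" by simp
      finally have "real e * real (card A) \<le> fact (Suc k) * 2 ^ J" .
      moreover have "real (card A) \<le> real e * real (card A)" using mult_right_mono[of 1 "real e" "real (card A)"] e1 by simp
      ultimately have "real (card A) \<le> fact (Suc k) * 2 ^ J" by linarith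
      then show ?thesis using cardA unfolding J_def by simp
    qed
  qed
qed


definition Dset :: "nat set \<Rightarrow> nat \<Rightarrow> nat set" where
  "Dset P n = {d. d dvd n \<and> (\<forall>p. prime p \<and> p dvd d \<longrightarrow> p \<in> P)}"

lemma dtilde_Dset: "dtilde P n = card (Dset P n)"
  unfolding dtilde_def Dset_def by simp

lemma finite_Dset: "0 < n \<Longrightarrow> finite (Dset P n)"
  unfolding Dset_def by (rule finite_subset[of _ "{..n}"]) (auto intro: dvd_imp_le)

lemma dtilde_mult:
  assumes "0 < a" "0 < b"
  shows "dtilde P (a * b) \<le> dtilde P a * dtilde P b"
proof -
  have "Dset P (a * b) \<subseteq> (\<lambda>(x, y). x * y) ` (Dset P a \<times> Dset P b)"
  proof
    fix d assume d: "d \<in> Dset P (a * b)"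
    then obtain x y where xy: "d = x * y" "x dvd a" "y dvd b"
      unfolding Dset_def using division_decomp by blast
    have "x \<in> Dset P a" "y \<in> Dset P b"
      using d xy unfolding Dset_def by (auto intro: dvd_trans)
    then show "d \<in> (\<lambda>(x, y). x * y) ` (Dset P a \<times> Dset P b)" using xy by auto
  qed
  then have "card (Dset P (a * b)) \<le> card ((\<lambda>(x, y). x * y) ` (Dset P a \<times> Dset P b))"
    by (rule card_mono[rotated]) (use finite_Dset assms in auto)
  also have "\<dots> \<le> card (Dset P a \<times> Dset P b)" by (rule card_image_le) (use finite_Dset assms in auto)
  also have "\<dots> = card (Dset P a) * card (Dset P b)" by (rule card_cartesian_product)
  finally show ?thesis unfolding dtilde_Dset .
qed

lemma dtilde_prime: "prime q \<Longrightarrow> dtilde P q \<le> 2"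
proof -
  assume q: "prime q"
  have "Dset P q \<subseteq> {1, q}"
  proof
    fix d assume "d \<in> Dset P q"
    then have "d dvd q" unfolding Dset_def by simp
    then show "d \<in> {1, q}" using q prime_nat_iff by auto
  qed
  then have "card (Dset P q) \<le> card {1, q}" by (rule card_mono[rotated]) auto
  also have "\<dots> \<le> 2" by (simp add: card_insert_if)
  finally show ?thesis unfolding dtilde_Dset .
qed

lemma dtilde_prime_sq: "prime p \<Longrightarrow> dtilde P (p^2) \<le> 3"
proof -
  assume p: "prime p"
  have "Dset P (p^2) \<subseteq> {1, p, p^2}"
  proof
    fix d assume "d \<in> Dset P (p^2)"
    then have "d dvd p^2" unfolding Dset_def by simp
    then obtain i where "i \<le> 2" "d = p ^ i" using divides_primepow_nat[OF p] by blast
    then show "d \<in> {1, p, p^2}" by (auto simp: le_Suc_eq numeral_2_eq_2)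
  qed
  then have "card (Dset P (p^2)) \<le> card {1, p, p^2}" by (rule card_mono[rotated]) auto
  also have "\<dots> \<le> 3" by (simp add: card_insert_if)
  finally show ?thesis unfolding dtilde_Dset .
qed

definition delta :: "nat \<Rightarrow> real" where
  "delta q = (if prime q then 2 else 3)"

lemma dtilde_prod_list:
  assumes "adm Q" "set xs \<subseteq> Q"
  shows "real (dtilde P (prod_list xs)) \<le> prod_list (map delta xs)"
  using assms(2)
proof (induction xs)
  case Nil
  have "Dset P 1 \<subseteq> {1}" unfolding Dset_def by auto
  then have "card (Dset P 1) \<le> card {1::nat}" by (rule card_mono[rotated]) auto
  then have "card (Dset P 1) \<le> 1" by simp
  then show ?case by (simp add: dtilde_Dset)
next
  case (Cons a xs)
  have aQ: "a \<in> Q" using Cons by simp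
  have a0: "0 < a" using adm_pos[OF assms(1) aQ] .
  have p0: "0 < prod_list xs" using Cons adm_pos[OF assms(1)] by (intro prod_list_pos) auto
  have da: "real (dtilde P a) \<le> delta a"
  proof -
    obtain r where r: "prime r" "a = r \<or> a = r^2" using adm_elem[OF assms(1) aQ] by blast
    show ?thesis
    proof (cases "a = r")
      case True then show ?thesis using dtilde_prime[of a P] r unfolding delta_def by auto
    next
      case False
      then have a: "a = r^2" using r by auto
      then have "\<not> prime a" by (simp add: prime_power_iff)
      then show ?thesis using dtilde_prime_sq[OF r(1), of P] a unfolding delta_def by auto
    qed
  qed
  have "real (dtilde P (prod_list (a # xs))) \<le> real (dtilde P a) * real (dtilde P (prod_list xs))"
    using dtilde_mult[OF a0 p0, of P] by (simp flip: of_nat_mult)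
  also have "\<dots> \<le> delta a * prod_list (map delta xs)"
  proof (rule mult_mono[OF da])
    show "real (dtilde P (prod_list xs)) \<le> prod_list (map delta xs)" using Cons by simp
    show "0 \<le> delta a" by (simp add: delta_def)
  qed simp
  finally show ?case by simp
qed

lemma prime_dvd_prod_list:
  assumes "prime (p::nat)" "p dvd prod_list xs"
  shows "\<exists>q\<in>set xs. p dvd q"
  using assms(2)
proof (induction xs)
  case Nil then show ?case using assms(1) by simp
next
  case (Cons a xs)
  then show ?case using assms(1) by (auto simp: prime_dvd_mult_iff)
qed


lemma Lk_Suc: "Lk Q (Suc k) = (\<lambda>(q, xs). q # xs) ` (Q \<times> Lk Q k)"
  unfolding Lk_def by (auto simp: length_Suc_conv image_iff)

lemma sum_power_lists:
  fixes g :: "nat \<Rightarrow> 'a::comm_semiring_1"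
  assumes "finite Q"
  shows "(\<Sum>q\<in>Q. g q) ^ k = (\<Sum>xs\<in>Lk Q k. prod_list (map g xs))"
proof (induction k)
  case 0
  have "Lk Q 0 = {[]}" unfolding Lk_def by auto
  then show ?case by simp
next
  case (Suc k)
  have inj: "inj_on (\<lambda>(q, xs). q # xs) (Q \<times> Lk Q k)" by (auto simp: inj_on_def)
  have "(\<Sum>xs\<in>Lk Q (Suc k). prod_list (map g xs)) = (\<Sum>(q, xs)\<in>Q \<times> Lk Q k. g q * prod_list (map g xs))"
    unfolding Lk_Suc by (subst sum.reindex[OF inj]) (simp add: case_prod_unfold)
  also have "\<dots> = (\<Sum>q\<in>Q. g q) * (\<Sum>xs\<in>Lk Q k. prod_list (map g xs))"
    by (simp add: sum_product sum.cartesian_product)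
  finally show ?case using Suc by simp
qed

definition rho :: "nat \<Rightarrow> real" where
  "rho q = (if prime q then 1 else 2)"

lemma pow_Omega_rho:
  assumes "adm Q" "set xs \<subseteq> Q"
  shows "(2::real) ^ (sum_list (map Omega xs) - length xs) = prod_list (map rho xs)"
  using assms(2)
proof (induction xs)
  case Nil then show ?case by simp
next
  case (Cons a xs)
  have aQ: "a \<in> Q" using Cons by simp
  have ge: "length xs \<le> sum_list (map Omega xs)"
  proof -
    have "length xs = sum_list (map (\<lambda>_. 1) xs)" by (simp add: sum_list_triv)
    also have "\<dots> \<le> sum_list (map Omega xs)"
      by (rule sum_list_mono) (use Cons assms(1) Omega_adm in auto)
    finally show ?thesis .
  qed
  have ra: "(2::real) ^ (Omega a - 1) = rho a"
  proof -
    obtain r where r: "prime r" "a = r \<or> a = r^2" using adm_elem[OF assms(1) aQ] by blast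
    show ?thesis
    proof (cases "a = r")
      case True then show ?thesis using r Omega_prime unfolding rho_def by auto
    next
      case False
      then have a: "a = r^2" using r by auto
      then have "\<not> prime a" by (simp add: prime_power_iff)
      then show ?thesis using Omega_prime_sq[OF r(1)] a unfolding rho_def by auto
    qed
  qed
  have o1: "1 \<le> Omega a" using Omega_adm[OF assms(1) aQ] .
  have "sum_list (map Omega (a # xs)) - length (a # xs) = (Omega a - 1) + (sum_list (map Omega xs) - length xs)"
    using ge o1 by simp
  then have "(2::real) ^ (sum_list (map Omega (a # xs)) - length (a # xs)) = 2 ^ (Omega a - 1) * 2 ^ (sum_list (map Omega xs) - length xs)"
    by (simp add: power_add)
  then show ?case using Cons ra by simp
qed

lemma Rk_tuple:
  assumes adm: "adm Q" and fin: "finite Q" and xs: "xs \<in> Lk Q k"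
  shows "real (Rk Q k (prod_list xs)) \<le> fact k * prod_list (map rho xs)"
proof -
  have pos: "\<forall>q\<in>set xs. 0 < q" using xs adm_pos[OF adm] unfolding Lk_def by auto
  have "real (Rk Q k (prod_list xs)) \<le> fact k * 2 ^ (Omega (prod_list xs) - k)" by (rule Rk_bound[OF adm fin])
  also have "Omega (prod_list xs) - k = sum_list (map Omega xs) - length xs"
    using Omega_prod_list[OF pos] xs unfolding Lk_def by simp
  also have "(2::real) ^ (sum_list (map Omega xs) - length xs) = prod_list (map rho xs)"
    by (rule pow_Omega_rho[OF adm]) (use xs in \<open>auto simp: Lk_def\<close>)
  finally show ?thesis .
qed

lemma Rk_self_pos: "finite Q \<Longrightarrow> xs \<in> Lk Q k \<Longrightarrow> 0 < Rk Q k (prod_list xs)"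
  unfolding Rk_def by (subst card_gt_0_iff) (auto simp: finite_Lk)

lemma prod_list_le_pow:
  assumes "\<forall>q\<in>set xs. q \<le> U"
  shows "prod_list xs \<le> U ^ length (xs :: nat list)"
  using assms by (induction xs) (auto intro: mult_le_mono)

lemma weight_i:
  fixes I :: "(nat \<times> nat list) set"
  assumes fin: "finite Q" and finI: "finite I" and IL: "\<forall>j\<in>I. snd j \<in> Lk Q k"
    and sm: "\<forall>q\<in>Q. \<forall>p. prime p \<and> p dvd q \<longrightarrow> p \<in> P" and m0: "0 < m"
    and adm: "adm Q"
  shows "(\<Sum>j\<in>{j\<in>I. fst j * prod_list (snd j) = m}. 1 / real (Rk Q k (prod_list (snd j)))) \<le> real (dtilde P m)"
proof -
  define F where "F = {j\<in>I. fst j * prod_list (snd j) = m}"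
  define g where "g j = prod_list (snd j)" for j :: "nat \<times> nat list"
  have finF: "finite F" unfolding F_def using finI by simp
  have "(\<Sum>j\<in>F. 1 / real (Rk Q k (g j))) = (\<Sum>l\<in>g ` F. \<Sum>j\<in>{j\<in>F. g j = l}. 1 / real (Rk Q k (g j)))"
    by (rule sum.image_gen[OF finF])
  also have "\<dots> \<le> (\<Sum>l\<in>g ` F. 1)"
  proof (rule sum_mono)
    fix l assume l: "l \<in> g ` F"
    have "(\<Sum>j\<in>{j\<in>F. g j = l}. 1 / real (Rk Q k (g j))) = real (card {j\<in>F. g j = l}) / real (Rk Q k l)"
      by simp
    also have "\<dots> \<le> 1"
    proof -
      have l0: "0 < l"
      proof -
        obtain j where j: "j \<in> F" "g j = l" using l by auto
        have "snd j \<in> Lk Q k" using j IL unfolding F_def by auto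
        then have "\<forall>q\<in>set (snd j). 0 < q" using adm_pos[OF adm] unfolding Lk_def by auto
        then show ?thesis using j prod_list_pos unfolding g_def by blast
      qed
      have "card {j\<in>F. g j = l} \<le> Rk Q k l"
        unfolding Rk_def
      proof (rule card_inj_on_le[where f = snd])
        show "inj_on snd {j\<in>F. g j = l}"
        proof (rule inj_onI)
          fix j1 j2 assume a: "j1 \<in> {j\<in>F. g j = l}" "j2 \<in> {j\<in>F. g j = l}" "snd j1 = snd j2"
          then have "fst j1 * l = m" "fst j2 * l = m" unfolding F_def g_def by auto
          then have "fst j1 = fst j2" using l0 by (metis mult_right_cancel not_less0 )
          then show "j1 = j2" using a(3) by (simp add: prod_eq_iff)
        qed
        show "snd ` {j\<in>F. g j = l} \<subseteq> {xs \<in> Lk Q k. prod_list xs = l}"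
          using IL unfolding F_def g_def by auto
        show "finite {xs \<in> Lk Q k. prod_list xs = l}" using finite_Lk[OF fin] by simp
      qed
      then show ?thesis
        by (cases "Rk Q k l = 0") (auto simp: divide_le_eq_1)
    qed
    finally show "(\<Sum>j\<in>{j\<in>F. g j = l}. 1 / real (Rk Q k (g j))) \<le> 1" .
  qed
  also have "\<dots> = real (card (g ` F))" by simp
  also have "\<dots> \<le> real (card (Dset P m))"
  proof -
    have "g ` F \<subseteq> Dset P m"
    proof
      fix l assume "l \<in> g ` F"
      then obtain j where j: "j \<in> F" "l = g j" by auto
      have xs: "snd j \<in> Lk Q k" using j IL unfolding F_def by auto
      have dv: "l dvd m" using j unfolding F_def g_def by auto
      have "\<forall>p. prime p \<and> p dvd l \<longrightarrow> p \<in> P"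
      proof (intro allI impI)
        fix p assume p: "prime p \<and> p dvd l"
        then obtain q where "q \<in> set (snd j)" "p dvd q" using prime_dvd_prod_list[of p "snd j"] j unfolding g_def by auto
        then show "p \<in> P" using sm xs p unfolding Lk_def by auto
      qed
      then show "l \<in> Dset P m" unfolding Dset_def using dv by simp
    qed
    then show ?thesis by (intro of_nat_mono card_mono finite_Dset m0)
  qed
  finally show ?thesis unfolding F_def g_def dtilde_Dset .
qed

lemma weight_ii:
  assumes fin: "finite Q" and xs: "xs \<in> Lk Q k"
  shows "(\<Sum>j\<in>{j\<in>Lk Q k. prod_list j = prod_list xs}. 1 / real (Rk Q k (prod_list j))) = 1"
proof -
  have "(\<Sum>j\<in>{j\<in>Lk Q k. prod_list j = prod_list xs}. 1 / real (Rk Q k (prod_list j)))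
     = real (card {j\<in>Lk Q k. prod_list j = prod_list xs}) / real (Rk Q k (prod_list xs))" by simp
  also have "\<dots> = 1" using Rk_self_pos[OF fin xs] unfolding Rk_def by simp
  finally show ?thesis .
qed


lemma nterm:
  assumes "0 < n"
  shows "(of_nat n :: complex) powr (- \<i> * of_real t) = cis (-(t * ln (real n)))"
proof -
  have "(of_nat n :: complex) powr (- \<i> * of_real t) = exp ((- \<i> * of_real t) * of_real (ln (real n)))"
    using assms by (simp add: powr_def Ln_of_nat)
  also have "\<dots> = exp (\<i> * of_real (-(t * ln (real n))))" by (simp add: algebra_simps)
  also have "\<dots> = cis (-(t * ln (real n)))" by (simp add: cis_conv_exp)
  finally show ?thesis .
qed

lemma qterm:
  assumes "0 < q"
  shows "a / ((of_nat q :: complex) powr (1/2 + \<i> * of_real t)) = a / of_real (sqrt (real q)) * cis (-(t * ln (real q)))"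
proof -
  have e: "exp (ln (real q) / 2) = sqrt (real q)"
    using assms by (simp add: powr_half_sqrt[symmetric] powr_def)
  have "(of_nat q :: complex) powr (1/2 + \<i> * of_real t) = exp ((1/2 + \<i> * of_real t) * of_real (ln (real q)))"
    using assms by (simp add: powr_def Ln_of_nat)
  also have "\<dots> = exp (of_real (ln (real q) / 2)) * exp (\<i> * of_real (t * ln (real q)))"
    by (simp add: exp_add[symmetric] algebra_simps)
  also have "\<dots> = of_real (sqrt (real q)) * cis (t * ln (real q))"
  proof -
    have "exp (complex_of_real (ln (real q) / 2)) = of_real (exp (ln (real q) / 2))"
      by (rule exp_of_real)
    then show ?thesis by (simp only: e cis_conv_exp)
  qed
  finally have p: "(of_nat q :: complex) powr (1/2 + \<i> * of_real t) = of_real (sqrt (real q)) * cis (t * ln (real q))" .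
  have ci: "cis (t * ln (real q)) * cis (-(t * ln (real q))) = 1" by (simp add: cis_mult)
  have s0: "of_real (sqrt (real q)) \<noteq> (0::complex)" using assms by simp
  show ?thesis unfolding p
    by (rule divide_eq_imp) (use s0 ci in \<open>auto simp: field_simps\<close>)
qed


lemma cis_prod_list:
  assumes "\<forall>q\<in>set xs. 0 < q"
  shows "prod_list (map (\<lambda>q. al q * cis (-(t * ln (real q)))) xs) = prod_list (map al xs) * cis (-(t * ln (real (prod_list xs))))"
  using assms
proof (induction xs)
  case Nil then show ?case by simp
next
  case (Cons a xs)
  have p: "0 < prod_list xs" using Cons by (intro prod_list_pos) auto
  have a: "0 < a" using Cons by simp
  have "ln (real (prod_list (a # xs))) = ln (real a) + ln (real (prod_list xs))"
    using a p by (simp add: ln_mult)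
  moreover have "cis (- (t * ln (real a))) * cis (- (t * ln (real (prod_list xs)))) =
        cis (- (t * ln (real a)) - t * ln (real (prod_list xs)))" by (simp add: cis_mult)
  ultimately show ?case using Cons by (simp add: algebra_simps)
qed

lemma norm_prod_list: "cmod (prod_list (map f xs)) = prod_list (map (\<lambda>q. cmod (f q)) xs)"
  by (induction xs) (auto simp: norm_mult)

lemma prod_list_map_mult: "prod_list (map f xs) * prod_list (map g xs) = prod_list (map (\<lambda>q. f q * g q) xs)"
  for f g :: "'a \<Rightarrow> real"
  by (induction xs) (auto simp: algebra_simps)

lemma prod_list_nonneg: "\<forall>q\<in>set xs. 0 \<le> f q \<Longrightarrow> 0 \<le> prod_list (map f xs)"
  for f :: "'a \<Rightarrow> real"
  by (induction xs) auto

lemma prod_list_mono_map: "\<forall>q\<in>set xs. 0 \<le> f q \<and> f q \<le> g q \<Longrightarrow> prod_list (map f xs) \<le> prod_list (map g xs)"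
  for f g :: "'a \<Rightarrow> real"
proof (induction xs)
  case Nil then show ?case by simp
next
  case (Cons a xs)
  have h: "0 \<le> f a" "f a \<le> g a" using Cons.prems by auto
  have ih: "prod_list (map f xs) \<le> prod_list (map g xs)" using Cons by simp
  have nn: "0 \<le> prod_list (map f xs)" using Cons.prems by (intro prod_list_nonneg) auto
  have "f a * prod_list (map f xs) \<le> g a * prod_list (map g xs)"
    by (rule mult_mono[OF h(2) ih]) (use h nn in auto)
  then show ?case by simp
qed

lemma finite_Nx: "finite {n::nat. 1 \<le> n \<and> real n \<le> x}"
proof (rule finite_subset[of _ "{..nat \<lceil>x\<rceil>}"])
  show "{n::nat. 1 \<le> n \<and> real n \<le> x} \<subseteq> {..nat \<lceil>x\<rceil>}"
  proof
    fix n assume "n \<in> {n::nat. 1 \<le> n \<and> real n \<le> x}"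
    then have "real n \<le> x" by simp
    moreover have "x \<le> of_int \<lceil>x\<rceil>" by (rule le_of_int_ceiling)
    ultimately have "of_int (int n) \<le> (of_int \<lceil>x\<rceil> :: real)" by (simp only: of_int_of_nat_eq)
    then have "int n \<le> \<lceil>x\<rceil>" by (simp only: of_int_le_iff)
    then show "n \<in> {..nat \<lceil>x\<rceil>}" by simp
  qed
qed simp


lemma cmod_alpha_sq:
  assumes "0 < q"
  shows "(cmod (a / complex_of_real (sqrt (real q))))^2 = (cmod a)^2 / real q"
proof -
  have "cmod (a / complex_of_real (sqrt (real q))) = cmod a / sqrt (real q)"
    by (simp add: norm_divide)
  moreover have "(sqrt (real q))^2 = real q" by simp
  ultimately show ?thesis by (simp add: power_divide)
qed

lemma Qpoly_expand:
  assumes fin: "finite Qs" and adm: "adm Qs"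
  shows "(Qpoly Qs a t) ^ k = (\<Sum>xs\<in>Lk Qs k. prod_list (map (\<lambda>q. a q / complex_of_real (sqrt (real q))) xs)
            * cis (-(t * ln (real (prod_list xs)))))"
proof -
  define al where "al q = a q / complex_of_real (sqrt (real q))" for q
  have "Qpoly Qs a t = (\<Sum>q\<in>Qs. al q * cis (-(t * ln (real q))))"
    unfolding Qpoly_def al_def by (intro sum.cong refl qterm adm_pos[OF adm])
  then have "(Qpoly Qs a t) ^ k = (\<Sum>xs\<in>Lk Qs k. prod_list (map (\<lambda>q. al q * cis (-(t * ln (real q)))) xs))"
    using sum_power_lists[OF fin] by simp
  also have "\<dots> = (\<Sum>xs\<in>Lk Qs k. prod_list (map al xs) * cis (-(t * ln (real (prod_list xs)))))"
  proof (rule sum.cong[OF refl])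
    fix xs assume "xs \<in> Lk Qs k"
    then have "\<forall>q\<in>set xs. 0 < q" using adm_pos[OF adm] unfolding Lk_def by auto
    then show "prod_list (map (\<lambda>q. al q * cis (-(t * ln (real q)))) xs) = prod_list (map al xs) * cis (-(t * ln (real (prod_list xs))))"
      by (rule cis_prod_list)
  qed
  finally show ?thesis unfolding al_def .
qed

lemma prod_list_sq: "(prod_list (map f xs))^2 = prod_list (map (\<lambda>q. (f q)^2) xs)" for f :: "'a \<Rightarrow> real"
  using prod_list_map_mult[of f xs f] by (simp add: power2_eq_square)

lemma alpha_prod_sq:
  assumes "\<forall>q\<in>set xs. 0 < q"
  shows "(cmod (prod_list (map (\<lambda>q. a q / complex_of_real (sqrt (real q))) xs)))^2 = prod_list (map (\<lambda>q. (cmod (a q))^2 / real q) xs)"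
proof -
  have "(cmod (prod_list (map (\<lambda>q. a q / complex_of_real (sqrt (real q))) xs)))^2
      = prod_list (map (\<lambda>q. (cmod (a q / complex_of_real (sqrt (real q))))^2) xs)"
    by (simp only: norm_prod_list prod_list_sq)
  also have "\<dots> = prod_list (map (\<lambda>q. (cmod (a q))^2 / real q) xs)"
    using assms by (intro arg_cong[where f=prod_list] map_cong refl cmod_alpha_sq) auto
  finally show ?thesis .
qed

lemma Max_ge1: "finite Qs \<Longrightarrow> adm Qs \<Longrightarrow> Qs \<noteq> {} \<Longrightarrow> 1 \<le> Max Qs"
proof -
  assume a: "finite Qs" "adm Qs" "Qs \<noteq> {}"
  then obtain q where "q \<in> Qs" by auto
  then have "0 < q" "q \<le> Max Qs" using adm_pos[OF a(2)] Max_ge[OF a(1)] by auto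
  then show ?thesis by linarith
qed

lemma Lk_prod_bound:
  assumes fin: "finite Qs" and adm: "adm Qs" and xs: "xs \<in> Lk Qs k"
  shows "0 < prod_list xs \<and> real (prod_list xs) \<le> real (Max Qs) ^ k"
proof
  show "0 < prod_list xs" using xs adm_pos[OF adm] prod_list_pos unfolding Lk_def by blast
  have "prod_list xs \<le> Max Qs ^ length xs"
    by (rule prod_list_le_pow) (use xs Max_ge[OF fin] in \<open>auto simp: Lk_def\<close>)
  then show "real (prod_list xs) \<le> real (Max Qs) ^ k" using xs unfolding Lk_def by (simp flip: of_nat_power)
qed

lemma part_ii:
  assumes fin: "finite Qs" and adm: "adm Qs" and ne: "Qs \<noteq> {}" and T: "real (Max Qs) ^ k < T"
  shows "(1/T) * integral {T..2*T} (\<lambda>t. (cmod (Qpoly Qs a t))^(2*k))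
          \<le> 34 * fact k * (\<Sum>q\<in>Qs. vq q * (cmod (a q))^2 / real q)^k"
proof -
  define al where "al q = a q / complex_of_real (sqrt (real q))" for q
  define N where "N = real (Max Qs) ^ k"
  have N0: "0 \<le> N" unfolding N_def by simp
  have T0: "0 < T" using T N0 unfolding N_def by linarith
  have eqI: "(\<lambda>t. (cmod (Qpoly Qs a t))^(2*k)) =
        (\<lambda>t. (cmod (\<Sum>xs\<in>Lk Qs k. prod_list (map al xs) * cis (-(t * ln (real (prod_list xs))))))^2)"
  proof
    fix t
    have "(cmod (Qpoly Qs a t))^(2*k) = (cmod ((Qpoly Qs a t)^k))^2"
      by (simp add: norm_power power_mult[symmetric] mult.commute)
    then show "(cmod (Qpoly Qs a t))^(2*k) = (cmod (\<Sum>xs\<in>Lk Qs k. prod_list (map al xs) * cis (-(t * ln (real (prod_list xs))))))^2"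
      unfolding Qpoly_expand[OF fin adm] al_def by simp
  qed
  have "integral {T..2*T} (\<lambda>t. (cmod (Qpoly Qs a t))^(2*k))
     \<le> 34 * T * (\<Sum>xs\<in>Lk Qs k. (cmod (prod_list (map al xs)))^2 / (1 / real (Rk Qs k (prod_list xs)))
            * (\<Sum>j\<in>{j\<in>Lk Qs k. prod_list j = prod_list xs}. 1 / real (Rk Qs k (prod_list j))))"
    unfolding eqI
  proof (rule mvt_index)
    show "finite (Lk Qs k)" by (rule finite_Lk[OF fin])
    show "\<forall>i\<in>Lk Qs k. 0 < prod_list i \<and> real (prod_list i) \<le> N"
      using Lk_prod_bound[OF fin adm] unfolding N_def by blast
    show "\<forall>i\<in>Lk Qs k. 0 < 1 / real (Rk Qs k (prod_list i))"
      using Rk_self_pos[OF fin] by simp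
  qed (use N0 T0 T in \<open>auto simp: N_def\<close>)
  also have "\<dots> \<le> 34 * T * (\<Sum>xs\<in>Lk Qs k. fact k * prod_list (map (\<lambda>q. vq q * ((cmod (a q))^2 / real q)) xs))"
  proof (rule mult_left_mono[OF sum_mono])
    fix xs assume xs: "xs \<in> Lk Qs k"
    have pos: "\<forall>q\<in>set xs. 0 < q" using xs adm_pos[OF adm] unfolding Lk_def by auto
    have "(cmod (prod_list (map al xs)))^2 / (1 / real (Rk Qs k (prod_list xs)))
            * (\<Sum>j\<in>{j\<in>Lk Qs k. prod_list j = prod_list xs}. 1 / real (Rk Qs k (prod_list j)))
          = prod_list (map (\<lambda>q. (cmod (a q))^2 / real q) xs) * real (Rk Qs k (prod_list xs))"
      using weight_ii[OF fin xs] alpha_prod_sq[OF pos, of a] unfolding al_def by simp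
    also have "\<dots> \<le> prod_list (map (\<lambda>q. (cmod (a q))^2 / real q) xs) * (fact k * prod_list (map rho xs))"
      by (rule mult_left_mono[OF Rk_tuple[OF adm fin xs]]) (intro prod_list_nonneg, simp)
    also have "\<dots> = fact k * prod_list (map (\<lambda>q. rho q * ((cmod (a q))^2 / real q)) xs)"
    proof -
      have e: "prod_list (map rho xs) * prod_list (map (\<lambda>q. (cmod (a q))^2 / real q) xs) = prod_list (map (\<lambda>q. rho q * ((cmod (a q))^2 / real q)) xs)"
        by (rule prod_list_map_mult)
      show ?thesis unfolding e[symmetric] by (simp only: mult_ac)
    qed
    also have "\<dots> \<le> fact k * prod_list (map (\<lambda>q. vq q * ((cmod (a q))^2 / real q)) xs)"
      by (intro mult_left_mono prod_list_mono_map) (auto simp: rho_def vq_def intro!: divide_right_mono)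
    finally show "(cmod (prod_list (map al xs)))^2 / (1 / real (Rk Qs k (prod_list xs)))
            * (\<Sum>j\<in>{j\<in>Lk Qs k. prod_list j = prod_list xs}. 1 / real (Rk Qs k (prod_list j)))
          \<le> fact k * prod_list (map (\<lambda>q. vq q * ((cmod (a q))^2 / real q)) xs)" .
  qed (use T0 in simp)
  also have "\<dots> = 34 * T * (fact k * (\<Sum>q\<in>Qs. vq q * ((cmod (a q))^2 / real q))^k)"
    by (simp add: sum_distrib_left[symmetric] sum_power_lists[OF fin])
  finally have "integral {T..2*T} (\<lambda>t. (cmod (Qpoly Qs a t))^(2*k)) \<le> 34 * T * (fact k * (\<Sum>q\<in>Qs. vq q * ((cmod (a q))^2 / real q))^k)" .
  then have "(1/T) * integral {T..2*T} (\<lambda>t. (cmod (Qpoly Qs a t))^(2*k)) \<le> (1/T) * (34 * T * (fact k * (\<Sum>q\<in>Qs. vq q * ((cmod (a q))^2 / real q))^k))"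
    using T0 by (intro mult_left_mono) auto
  also have "\<dots> = 34 * fact k * (\<Sum>q\<in>Qs. vq q * (cmod (a q))^2 / real q)^k"
    using T0 by simp
  finally show ?thesis .
qed


lemma Dpoly_expand:
  "Dpoly x c t = (\<Sum>n\<in>{n. 1 \<le> n \<and> real n \<le> x}. c n * cis (-(t * ln (real n))))"
  unfolding Dpoly_def
proof (rule sum.cong[OF refl])
  fix n assume "n \<in> {n. 1 \<le> n \<and> real n \<le> x}"
  then have "0 < n" by simp
  then show "c n * of_nat n powr (- \<i> * of_real t) = c n * cis (-(t * ln (real n)))"
    using nterm[of n t] by simp
qed

lemma part_i:
  fixes a c :: "nat \<Rightarrow> complex" and x T :: real
  assumes fin: "finite Qs" and adm: "adm Qs" and ne: "Qs \<noteq> {}"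
    and sm: "\<forall>q\<in>Qs. \<forall>p. prime p \<and> p dvd q \<longrightarrow> p \<in> P"
    and x1: "1 \<le> x" and T: "x * real (Max Qs) ^ k < T"
  shows "(1/T) * integral {T..2*T} (\<lambda>t. (cmod (Dpoly x c t))^2 * (cmod (Qpoly Qs a t))^(2*k))
        \<le> 34 * (\<Sum>n\<in>{n. 1 \<le> n \<and> real n \<le> x}. real (dtilde P n) * (cmod (c n))^2)
            * fact k * (2 * (\<Sum>q\<in>Qs. vq q * (cmod (a q))^2 / real q))^k"
proof -
  define al where "al q = a q / complex_of_real (sqrt (real q))" for q
  define Nx where "Nx = {n::nat. 1 \<le> n \<and> real n \<le> x}"
  define I where "I = Nx \<times> Lk Qs k"
  define N where "N = x * real (Max Qs) ^ k"
  define A2 where "A2 q = (cmod (a q))^2 / real q" for q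
  have finI: "finite I" unfolding I_def Nx_def using finite_Nx finite_Lk[OF fin] by simp
  have N0: "0 \<le> N" unfolding N_def using x1 by simp
  have T0: "0 < T" using T N0 unfolding N_def by linarith
  have prodeq: "Dpoly x c t * (Qpoly Qs a t)^k =
     (\<Sum>j\<in>I. (c (fst j) * prod_list (map al (snd j))) * cis (-(t * ln (real (fst j * prod_list (snd j))))))" for t
  proof -
    have "Dpoly x c t * (Qpoly Qs a t)^k = (\<Sum>n\<in>Nx. c n * cis (-(t * ln (real n)))) *
       (\<Sum>xs\<in>Lk Qs k. prod_list (map al xs) * cis (-(t * ln (real (prod_list xs)))))"
      unfolding Dpoly_expand Qpoly_expand[OF fin adm] Nx_def al_def by simp
    also have "\<dots> = (\<Sum>(n, xs)\<in>Nx \<times> Lk Qs k. (c n * cis (-(t * ln (real n)))) * (prod_list (map al xs) * cis (-(t * ln (real (prod_list xs))))))"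
      by (simp add: sum_product sum.cartesian_product)
    also have "\<dots> = (\<Sum>j\<in>I. (c (fst j) * prod_list (map al (snd j))) * cis (-(t * ln (real (fst j * prod_list (snd j))))))"
      unfolding I_def
    proof (rule sum.cong[OF refl], clarify)
      fix n xs assume nx: "n \<in> Nx" "xs \<in> Lk Qs k"
      have n0: "0 < n" using nx unfolding Nx_def by auto
      have p0: "0 < prod_list xs" using Lk_prod_bound[OF fin adm nx(2)] by simp
      have "ln (real (n * prod_list xs)) = ln (real n) + ln (real (prod_list xs))"
        using n0 p0 by (simp add: ln_mult)
      moreover have "cis (-(t * ln (real n))) * cis (-(t * ln (real (prod_list xs)))) = cis (-(t * ln (real n)) - t * ln (real (prod_list xs)))"
        by (simp add: cis_mult)
      ultimately show "(c n * cis (-(t * ln (real n)))) * (prod_list (map al xs) * cis (-(t * ln (real (prod_list xs)))))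
          = (c (fst (n, xs)) * prod_list (map al (snd (n, xs)))) * cis (-(t * ln (real (fst (n, xs) * prod_list (snd (n, xs))))))"
        by (simp add: algebra_simps)
    qed
    finally show ?thesis .
  qed
  have eqI: "(\<lambda>t. (cmod (Dpoly x c t))^2 * (cmod (Qpoly Qs a t))^(2*k)) =
     (\<lambda>t. (cmod (\<Sum>j\<in>I. (c (fst j) * prod_list (map al (snd j))) * cis (-(t * ln (real (fst j * prod_list (snd j)))))))^2)"
  proof
    fix t
    have "(cmod (Dpoly x c t))^2 * (cmod (Qpoly Qs a t))^(2*k) = (cmod (Dpoly x c t * (Qpoly Qs a t)^k))^2"
      by (simp add: norm_mult norm_power power_mult[symmetric] mult.commute power_mult_distrib)
    then show "(cmod (Dpoly x c t))^2 * (cmod (Qpoly Qs a t))^(2*k) =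
       (cmod (\<Sum>j\<in>I. (c (fst j) * prod_list (map al (snd j))) * cis (-(t * ln (real (fst j * prod_list (snd j)))))))^2"
      by (simp only: prodeq)
  qed
  define w where "w j = 1 / real (Rk Qs k (prod_list (snd j)))" for j :: "nat \<times> nat list"
  have "integral {T..2*T} (\<lambda>t. (cmod (Dpoly x c t))^2 * (cmod (Qpoly Qs a t))^(2*k))
     \<le> 34 * T * (\<Sum>j\<in>I. (cmod (c (fst j) * prod_list (map al (snd j))))^2 / w j
            * (\<Sum>i\<in>{i\<in>I. fst i * prod_list (snd i) = fst j * prod_list (snd j)}. w i))"
    unfolding eqI
  proof (rule mvt_index[where f = "\<lambda>j. fst j * prod_list (snd j)"])
    show "finite I" by (rule finI)
    show "\<forall>i\<in>I. 0 < fst i * prod_list (snd i) \<and> real (fst i * prod_list (snd i)) \<le> N"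
    proof
      fix i assume i: "i \<in> I"
      then have n: "1 \<le> fst i" "real (fst i) \<le> x" and xs: "snd i \<in> Lk Qs k" unfolding I_def Nx_def by auto
      have pb: "0 < prod_list (snd i)" "real (prod_list (snd i)) \<le> real (Max Qs) ^ k"
        using Lk_prod_bound[OF fin adm xs] by auto
      have "real (fst i) * real (prod_list (snd i)) \<le> x * real (Max Qs) ^ k"
        by (rule mult_mono) (use n pb x1 in auto)
      then show "0 < fst i * prod_list (snd i) \<and> real (fst i * prod_list (snd i)) \<le> N"
        using n pb unfolding N_def by simp
    qed
    show "\<forall>i\<in>I. 0 < w i" unfolding w_def I_def using Rk_self_pos[OF fin] by auto
  qed (use N0 T0 T in \<open>auto simp: N_def\<close>)
  also have "\<dots> \<le> 34 * T * (\<Sum>j\<in>I. (real (dtilde P (fst j)) * (cmod (c (fst j)))^2)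
                     * (fact k * prod_list (map (\<lambda>q. 2 * vq q * A2 q) (snd j))))"
  proof (rule mult_left_mono[OF sum_mono])
    fix j assume j: "j \<in> I"
    obtain n xs where jj: "j = (n, xs)" by (cases j)
    have nx: "n \<in> Nx" "xs \<in> Lk Qs k" using j jj unfolding I_def by auto
    have n0: "0 < n" using nx unfolding Nx_def by auto
    have pos: "\<forall>q\<in>set xs. 0 < q" using nx adm_pos[OF adm] unfolding Lk_def by auto
    have p0: "0 < prod_list xs" using prod_list_pos[OF pos] .
    have A2nn: "0 \<le> prod_list (map A2 xs)" by (rule prod_list_nonneg) (simp add: A2_def)
    have W: "(\<Sum>i\<in>{i\<in>I. fst i * prod_list (snd i) = fst j * prod_list (snd j)}. w i) \<le> real (dtilde P (n * prod_list xs))"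
      unfolding w_def jj using weight_i[OF fin finI _ sm _ adm, of k "n * prod_list xs"] n0 p0
      unfolding I_def by auto
    have D: "real (dtilde P (n * prod_list xs)) \<le> real (dtilde P n) * prod_list (map delta xs)"
    proof -
      have "real (dtilde P (n * prod_list xs)) \<le> real (dtilde P n) * real (dtilde P (prod_list xs))"
        using dtilde_mult[OF n0 p0, of P] by (simp flip: of_nat_mult)
      also have "\<dots> \<le> real (dtilde P n) * prod_list (map delta xs)"
        by (rule mult_left_mono[OF dtilde_prod_list[OF adm]]) (use nx in \<open>auto simp: Lk_def\<close>)
      finally show ?thesis .
    qed
    have R: "real (Rk Qs k (prod_list xs)) \<le> fact k * prod_list (map rho xs)" by (rule Rk_tuple[OF adm fin nx(2)])
    have zsq: "(cmod (c n * prod_list (map al xs)))^2 = (cmod (c n))^2 * prod_list (map A2 xs)"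
      using alpha_prod_sq[OF pos, of a] unfolding al_def A2_def by (simp add: norm_mult power_mult_distrib)
    have "(cmod (c (fst j) * prod_list (map al (snd j))))^2 / w j
            * (\<Sum>i\<in>{i\<in>I. fst i * prod_list (snd i) = fst j * prod_list (snd j)}. w i)
        \<le> ((cmod (c n))^2 * prod_list (map A2 xs)) * real (Rk Qs k (prod_list xs)) * real (dtilde P (n * prod_list xs))"
    proof -
      have e1: "(cmod (c (fst j) * prod_list (map al (snd j))))^2 / w j = ((cmod (c n))^2 * prod_list (map A2 xs)) * real (Rk Qs k (prod_list xs))"
        unfolding jj w_def using zsq by simp
      have nn: "0 \<le> ((cmod (c n))^2 * prod_list (map A2 xs)) * real (Rk Qs k (prod_list xs))" using A2nn by simp
      show ?thesis unfolding e1 by (rule mult_left_mono[OF W nn])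
    qed
    also have "\<dots> \<le> ((cmod (c n))^2 * prod_list (map A2 xs)) * (fact k * prod_list (map rho xs)) * (real (dtilde P n) * prod_list (map delta xs))"
      by (intro mult_mono R D mult_nonneg_nonneg A2nn) (auto intro: prod_list_nonneg simp: rho_def)
    also have "\<dots> = (real (dtilde P n) * (cmod (c n))^2) * (fact k * prod_list (map (\<lambda>q. rho q * delta q * A2 q) xs))"
      by (simp add: prod_list_map_mult[symmetric] mult_ac)
    also have "\<dots> \<le> (real (dtilde P n) * (cmod (c n))^2) * (fact k * prod_list (map (\<lambda>q. 2 * vq q * A2 q) xs))"
      by (intro mult_left_mono prod_list_mono_map) (auto simp: rho_def vq_def delta_def A2_def intro!: divide_right_mono)
    finally show "(cmod (c (fst j) * prod_list (map al (snd j))))^2 / w j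
            * (\<Sum>i\<in>{i\<in>I. fst i * prod_list (snd i) = fst j * prod_list (snd j)}. w i)
        \<le> (real (dtilde P (fst j)) * (cmod (c (fst j)))^2) * (fact k * prod_list (map (\<lambda>q. 2 * vq q * A2 q) (snd j)))"
      unfolding jj by simp
  qed (use T0 in simp)
  also have "\<dots> = 34 * T * ((\<Sum>n\<in>Nx. real (dtilde P n) * (cmod (c n))^2) * (fact k * (\<Sum>q\<in>Qs. 2 * vq q * A2 q)^k))"
  proof -
    define F where "F n = real (dtilde P n) * (cmod (c n))^2" for n
    define G where "G xs = fact k * prod_list (map (\<lambda>q. 2 * vq q * A2 q) xs)" for xs
    have "(\<Sum>n\<in>Nx. F n) * (\<Sum>xs\<in>Lk Qs k. G xs) = (\<Sum>n\<in>Nx. \<Sum>xs\<in>Lk Qs k. F n * G xs)"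
      by (rule sum_product)
    also have "\<dots> = (\<Sum>(n, xs)\<in>Nx \<times> Lk Qs k. F n * G xs)" by (rule sum.cartesian_product)
    also have "\<dots> = (\<Sum>j\<in>I. F (fst j) * G (snd j))" unfolding I_def by (simp add: case_prod_unfold)
    finally have e: "(\<Sum>j\<in>I. F (fst j) * G (snd j)) = (\<Sum>n\<in>Nx. F n) * (\<Sum>xs\<in>Lk Qs k. G xs)" by simp
    have g: "(\<Sum>xs\<in>Lk Qs k. G xs) = fact k * (\<Sum>q\<in>Qs. 2 * vq q * A2 q)^k"
      unfolding G_def by (simp add: sum_distrib_left[symmetric] sum_power_lists[OF fin])
    show ?thesis using e g unfolding F_def G_def by simp
  qed
  finally have main: "integral {T..2*T} (\<lambda>t. (cmod (Dpoly x c t))^2 * (cmod (Qpoly Qs a t))^(2*k))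
      \<le> 34 * T * ((\<Sum>n\<in>Nx. real (dtilde P n) * (cmod (c n))^2) * (fact k * (\<Sum>q\<in>Qs. 2 * vq q * A2 q)^k))" .
  have s2: "(\<Sum>q\<in>Qs. 2 * vq q * A2 q) = 2 * (\<Sum>q\<in>Qs. vq q * (cmod (a q))^2 / real q)"
    unfolding A2_def by (simp add: sum_distrib_left mult_ac)
  have "(1/T) * integral {T..2*T} (\<lambda>t. (cmod (Dpoly x c t))^2 * (cmod (Qpoly Qs a t))^(2*k))
      \<le> (1/T) * (34 * T * ((\<Sum>n\<in>Nx. real (dtilde P n) * (cmod (c n))^2) * (fact k * (\<Sum>q\<in>Qs. 2 * vq q * A2 q)^k)))"
    using main T0 by (intro mult_left_mono) auto
  also have "\<dots> = 34 * (\<Sum>n\<in>{n. 1 \<le> n \<and> real n \<le> x}. real (dtilde P n) * (cmod (c n))^2)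
            * fact k * (2 * (\<Sum>q\<in>Qs. vq q * (cmod (a q))^2 / real q))^k"
    using T0 unfolding s2 Nx_def by simp
  finally show ?thesis .
qed


lemma prime_dvd_prime_eq: "prime (r::nat) \<Longrightarrow> prime q \<Longrightarrow> r dvd q \<Longrightarrow> r = q"
  using prime_nat_iff by (metis prime_gt_1_nat less_irrefl)

lemma Qs_props:
  assumes "finite P" "\<forall>p\<in>P. prime p" "Qs \<subseteq> P \<union> {p^2 | p. p \<in> P}"
  shows "finite Qs \<and> adm Qs \<and> (\<forall>q\<in>Qs. \<forall>r. prime r \<and> r dvd q \<longrightarrow> r \<in> P)"
proof (intro conjI)
  have "Qs \<subseteq> P \<union> (\<lambda>p. p^2) ` P" using assms(3) by auto
  then show "finite Qs" by (rule finite_subset) (use assms(1) in simp)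
  show "adm Qs" unfolding adm_def using assms(2,3) by blast
  show "\<forall>q\<in>Qs. \<forall>r. prime r \<and> r dvd q \<longrightarrow> r \<in> P"
  proof (intro ballI allI impI)
    fix q r assume q: "q \<in> Qs" and r: "prime r \<and> r dvd q"
    show "r \<in> P"
    proof (cases "q \<in> P")
      case True
      then have "prime q" using assms(2) by auto
      then have "r = q" using r prime_dvd_prime_eq by blast
      then show ?thesis using True by simp
    next
      case False
      then obtain p where p: "p \<in> P" "q = p^2" using q assms(3) by auto
      then have "r dvd p" using r prime_dvd_power_nat by blast
      then have "r = p" using r p assms(2) prime_dvd_prime_eq by blast
      then show ?thesis using p by simp
    qed
  qed
qed

theorem lemma2:
  shows "\<exists>C T0. C > 0 \<and> (\<forall>T x c P Qs a k.
     T \<ge> T0 \<and> x \<ge> 1 \<and> finite P \<and> (\<forall>p\<in>P. prime p) \<and>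
     Qs \<noteq> {} \<and> Qs \<subseteq> P \<union> {p^2 | p. p \<in> P} \<longrightarrow>
     (x * real (Max Qs) ^ k < T \<longrightarrow>
        (1/T) * integral {T..2*T} (\<lambda>t. (cmod (Dpoly x c t))^2 * (cmod (Qpoly Qs a t))^(2*k))
        \<le> C * (\<Sum>n\<in>{n. 1 \<le> n \<and> real n \<le> x}. real (dtilde P n) * (cmod (c n))^2)
            * fact k * (2 * (\<Sum>q\<in>Qs. vq q * (cmod (a q))^2 / real q))^k) \<and>
     (real (Max Qs) ^ k < T \<longrightarrow>
        (1/T) * integral {T..2*T} (\<lambda>t. (cmod (Qpoly Qs a t))^(2*k))
        \<le> C * fact k * (\<Sum>q\<in>Qs. vq q * (cmod (a q))^2 / real q)^k))"
proof (rule exI[of _ "34::real"], rule exI[of _ "0::real"], intro conjI allI impI)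
  show "(0::real) < 34" by simp
next
  fix T x :: real and c a :: "nat \<Rightarrow> complex" and P Qs :: "nat set" and k :: nat
  assume H: "0 \<le> T \<and> 1 \<le> x \<and> finite P \<and> (\<forall>p\<in>P. prime p) \<and> Qs \<noteq> {} \<and> Qs \<subseteq> P \<union> {p^2 | p. p \<in> P}"
    and T: "x * real (Max Qs) ^ k < T"
  have props: "finite Qs" "adm Qs" "\<forall>q\<in>Qs. \<forall>r. prime r \<and> r dvd q \<longrightarrow> r \<in> P"
    using Qs_props[of P Qs] H by auto
  show "(1/T) * integral {T..2*T} (\<lambda>t. (cmod (Dpoly x c t))^2 * (cmod (Qpoly Qs a t))^(2*k))
        \<le> 34 * (\<Sum>n\<in>{n. 1 \<le> n \<and> real n \<le> x}. real (dtilde P n) * (cmod (c n))^2)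
            * fact k * (2 * (\<Sum>q\<in>Qs. vq q * (cmod (a q))^2 / real q))^k"
    by (rule part_i[OF props(1,2)]) (use H T props(3) in auto)
next
  fix T x :: real and c a :: "nat \<Rightarrow> complex" and P Qs :: "nat set" and k :: nat
  assume H: "0 \<le> T \<and> 1 \<le> x \<and> finite P \<and> (\<forall>p\<in>P. prime p) \<and> Qs \<noteq> {} \<and> Qs \<subseteq> P \<union> {p^2 | p. p \<in> P}"
    and T: "real (Max Qs) ^ k < T"
  have props: "finite Qs" "adm Qs"
    using Qs_props[of P Qs] H by auto
  show "(1/T) * integral {T..2*T} (\<lambda>t. (cmod (Qpoly Qs a t))^(2*k))
        \<le> 34 * fact k * (\<Sum>q\<in>Qs. vq q * (cmod (a q))^2 / real q)^k"
    by (rule part_ii[OF props(1,2)]) (use H T in auto)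
qed


end
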